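(* Let $(M,g)$ be a (CQR)$_n$ pseudo-Riemannian manifold and let $\Gamma_{pr}=C_{pqlm}C_r{}^{qlm}$, with trace $\Gamma^q{}_q=C_{jklm}C^{jklm}$. If $\Gamma^q{}_q\neq 0$ everywhere, then $T_{pq}=|\Gamma^s{}_s|^{-3/4}\,\Gamma_{pq}$ is a Codazzi tensor, i.e. $\nabla_iT_{jq}=\nabla_jT_{iq}$.
   Context: $(M,g)$ is a connected Hausdorff pseudo-Riemannian manifold of dimension $n\ge 3$ with Levi-Civita connection $\nabla$; indices raised/lowered with $g$, repeated indices summed. $R_{jklm}$ is the Riemann tensor, $R_{kl}=-R_{mkl}{}^m$, $R=R^m{}_m$, and the Weyl tensor is $$C_{jklm}=R_{jklm}+\tfrac{1}{n-2}\big(g_{mj}R_{kl}-g_{mk}R_{jl}+R_{mj}g_{kl}-R_{mk}g_{jl}\big)-\tfrac{R}{(n-1)(n-2)}\big(g_{mj}g_{kl}-g_{mk}g_{jl}\big).$$ (CQR)$_n$: $C_{jklm}\not\equiv 0$ and there is a non-zero vector field $A_i$ (fundamental vector) with $$\nabla_i C_{jklm}=2A_iC_{jklm}+A_jC_{iklm}+A_kC_{jilm}+A_lC_{jkim}+A_mC_{jkli}.$$ *)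

theory Defs
  imports "HOL-Analysis.Analysis"
begin

text \<open>Local coordinate model of a pseudo-Riemannian manifold: an open connected
set U of real^'n (a coordinate chart), with metric components g x i j.
All tensors are given by their components in these coordinates.\<close>

type_synonym 'n field = "real^'n \<Rightarrow> real"

definition pd :: "'n::finite \<Rightarrow> 'n field \<Rightarrow> 'n field" where
  "pd i f x = deriv (\<lambda>t. f (x + t *\<^sub>R axis i 1)) 0"

fun pds :: "'n::finite list \<Rightarrow> 'n field \<Rightarrow> 'n field" where
  "pds [] f = f"
| "pds (i # is) f = pd i (pds is f)"

definition smooth_on :: "(real^'n::finite) set \<Rightarrow> 'n field \<Rightarrow> bool" where
  "smooth_on U f \<longleftrightarrow> (\<forall>is. pds is f differentiable_on U)"

definition pseudo_riemannian_chart ::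
  "(real^'n::finite) set \<Rightarrow> (real^'n \<Rightarrow> 'n \<Rightarrow> 'n \<Rightarrow> real) \<Rightarrow> bool" where
  "pseudo_riemannian_chart U g \<longleftrightarrow> open U \<and> connected U \<and> U \<noteq> {} \<and>
     (\<forall>i j. smooth_on U (\<lambda>x. g x i j)) \<and>
     (\<forall>x\<in>U. \<forall>i j. g x i j = g x j i) \<and>
     (\<forall>x\<in>U. det (\<chi> i j. g x i j) \<noteq> 0)"

definition ginv :: "(real^'n::finite \<Rightarrow> 'n \<Rightarrow> 'n \<Rightarrow> real) \<Rightarrow> real^'n \<Rightarrow> 'n \<Rightarrow> 'n \<Rightarrow> real" where
  "ginv g x i j = matrix_inv (\<chi> a b. g x a b) $ i $ j"

definition christoffel :: "(real^'n::finite \<Rightarrow> 'n \<Rightarrow> 'n \<Rightarrow> real) \<Rightarrow> real^'n \<Rightarrow> 'n \<Rightarrow> 'n \<Rightarrow> 'n \<Rightarrow> real" where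
  "christoffel g x k i j = (1/2) * (\<Sum>l\<in>UNIV. ginv g x k l *
      (pd i (\<lambda>y. g y j l) x + pd j (\<lambda>y. g y i l) x - pd l (\<lambda>y. g y i j) x))"

text \<open>R^d_{cab} with R(d_a,d_b)d_c = R^d_{cab} d_d, R(X,Y) = [nabla_X,nabla_Y] - nabla_[X,Y].\<close>
definition riemann_up :: "(real^'n::finite \<Rightarrow> 'n \<Rightarrow> 'n \<Rightarrow> real) \<Rightarrow> real^'n \<Rightarrow> 'n \<Rightarrow> 'n \<Rightarrow> 'n \<Rightarrow> 'n \<Rightarrow> real" where
  "riemann_up g x d c a b =
     pd a (\<lambda>y. christoffel g y d b c) x - pd b (\<lambda>y. christoffel g y d a c) x
     + (\<Sum>e\<in>UNIV. christoffel g x d a e * christoffel g x e b c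
                  - christoffel g x d b e * christoffel g x e a c)"

text \<open>R_{jklm} = g_{je} R^e_{klm}; then the paper's Ricci tensor R_{kl} = - R_{mkl}^m
  (contraction of the first and last index) is the usual Ricci tensor R^a_{kal}.\<close>
definition riemann :: "(real^'n::finite \<Rightarrow> 'n \<Rightarrow> 'n \<Rightarrow> real) \<Rightarrow> real^'n \<Rightarrow> 'n \<Rightarrow> 'n \<Rightarrow> 'n \<Rightarrow> 'n \<Rightarrow> real" where
  "riemann g x j k l m = (\<Sum>e\<in>UNIV. g x j e * riemann_up g x e k l m)"

definition ricci :: "(real^'n::finite \<Rightarrow> 'n \<Rightarrow> 'n \<Rightarrow> real) \<Rightarrow> real^'n \<Rightarrow> 'n \<Rightarrow> 'n \<Rightarrow> real" where
  "ricci g x k l = - (\<Sum>m\<in>UNIV. \<Sum>j\<in>UNIV. ginv g x m j * riemann g x m k l j)"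

definition scalar_curv :: "(real^'n::finite \<Rightarrow> 'n \<Rightarrow> 'n \<Rightarrow> real) \<Rightarrow> real^'n \<Rightarrow> real" where
  "scalar_curv g x = (\<Sum>a\<in>UNIV. \<Sum>b\<in>UNIV. ginv g x a b * ricci g x a b)"

definition weyl :: "(real^'n::finite \<Rightarrow> 'n \<Rightarrow> 'n \<Rightarrow> real) \<Rightarrow> real^'n \<Rightarrow> 'n \<Rightarrow> 'n \<Rightarrow> 'n \<Rightarrow> 'n \<Rightarrow> real" where
  "weyl g x j k l m = (let n = real CARD('n) in
     riemann g x j k l m
     + (1 / (n - 2)) * (g x m j * ricci g x k l - g x m k * ricci g x j l
                        + ricci g x m j * g x k l - ricci g x m k * g x j l)
     - scalar_curv g x / ((n - 1) * (n - 2)) * (g x m j * g x k l - g x m k * g x j l))"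

definition cov4 :: "(real^'n::finite \<Rightarrow> 'n \<Rightarrow> 'n \<Rightarrow> real) \<Rightarrow>
    (real^'n \<Rightarrow> 'n \<Rightarrow> 'n \<Rightarrow> 'n \<Rightarrow> 'n \<Rightarrow> real) \<Rightarrow> real^'n \<Rightarrow> 'n \<Rightarrow> 'n \<Rightarrow> 'n \<Rightarrow> 'n \<Rightarrow> 'n \<Rightarrow> real" where
  "cov4 g T x i j k l m = pd i (\<lambda>y. T y j k l m) x
     - (\<Sum>e\<in>UNIV. christoffel g x e i j * T x e k l m + christoffel g x e i k * T x j e l m
                + christoffel g x e i l * T x j k e m + christoffel g x e i m * T x j k l e)"

definition cov2 :: "(real^'n::finite \<Rightarrow> 'n \<Rightarrow> 'n \<Rightarrow> real) \<Rightarrow>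
    (real^'n \<Rightarrow> 'n \<Rightarrow> 'n \<Rightarrow> real) \<Rightarrow> real^'n \<Rightarrow> 'n \<Rightarrow> 'n \<Rightarrow> 'n \<Rightarrow> real" where
  "cov2 g T x i j q = pd i (\<lambda>y. T y j q) x
     - (\<Sum>e\<in>UNIV. christoffel g x e i j * T x e q + christoffel g x e i q * T x j e)"

definition CQR :: "(real^'n::finite) set \<Rightarrow> (real^'n \<Rightarrow> 'n \<Rightarrow> 'n \<Rightarrow> real) \<Rightarrow> (real^'n \<Rightarrow> 'n \<Rightarrow> real) \<Rightarrow> bool" where
  "CQR U g A \<longleftrightarrow>
     (\<exists>x\<in>U. \<exists>j k l m. weyl g x j k l m \<noteq> 0) \<and>
     (\<forall>i. smooth_on U (\<lambda>x. A x i)) \<and>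
     (\<exists>x\<in>U. \<exists>i. A x i \<noteq> 0) \<and>
     (\<forall>x\<in>U. \<forall>i j k l m. cov4 g (weyl g) x i j k l m =
        2 * A x i * weyl g x j k l m + A x j * weyl g x i k l m + A x k * weyl g x j i l m
        + A x l * weyl g x j k i m + A x m * weyl g x j k l i)"

definition weyl_sq :: "(real^'n::finite \<Rightarrow> 'n \<Rightarrow> 'n \<Rightarrow> real) \<Rightarrow> real^'n \<Rightarrow> 'n \<Rightarrow> 'n \<Rightarrow> real" where
  "weyl_sq g x p r = (\<Sum>q\<in>UNIV. \<Sum>l\<in>UNIV. \<Sum>m\<in>UNIV. \<Sum>a\<in>UNIV. \<Sum>b\<in>UNIV. \<Sum>c\<in>UNIV.
      weyl g x p q l m * ginv g x q a * ginv g x l b * ginv g x m c * weyl g x r a b c)"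

definition weyl_sq_trace :: "(real^'n::finite \<Rightarrow> 'n \<Rightarrow> 'n \<Rightarrow> real) \<Rightarrow> real^'n \<Rightarrow> real" where
  "weyl_sq_trace g x = (\<Sum>p\<in>UNIV. \<Sum>q\<in>UNIV. ginv g x p q * weyl_sq g x p q)"

end

theory Submission
  imports Defs
begin
lemma pd_line:
  fixes f :: "'n::finite field"
  assumes "f differentiable (at x)"
  shows "((\<lambda>t. f (x + t *\<^sub>R axis i 1)) has_real_derivative pd i f x) (at 0)"
proof -
  from assms obtain f' where F: "(f has_derivative f') (at x)" by (auto simp: differentiable_def)
  have L: "((\<lambda>t::real. x + t *\<^sub>R axis i 1) has_derivative (\<lambda>t. t *\<^sub>R axis i 1)) (at 0)"
    by (auto intro!: derivative_eq_intros)
  have F0: "(f has_derivative f') (at (x + 0 *\<^sub>R axis i 1))" using F by simp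
  have "((f \<circ> (\<lambda>t::real. x + t *\<^sub>R axis i 1)) has_derivative (f' \<circ> (\<lambda>t. t *\<^sub>R axis i 1))) (at 0)"
    by (rule diff_chain_at[OF L F0])
  moreover have "(f' \<circ> (\<lambda>t. t *\<^sub>R axis i 1)) = (\<lambda>t. f' (axis i 1) * t)"
    using linear_scale[OF has_derivative_linear[OF F]] by (auto simp: o_def mult.commute)
  ultimately have D: "((\<lambda>t. f (x + t *\<^sub>R axis i 1)) has_real_derivative f' (axis i 1)) (at 0)"
    by (simp add: has_field_derivative_def o_def)
  hence "pd i f x = f' (axis i 1)" unfolding pd_def by (rule DERIV_imp_deriv)
  thus ?thesis using D by simp
qed

lemma pd_eq:
  "((\<lambda>t. f (x + t *\<^sub>R axis i 1)) has_real_derivative D) (at 0) \<Longrightarrow> pd i f x = D"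
  unfolding pd_def by (rule DERIV_imp_deriv)

lemma pd_mult:
  assumes "f differentiable (at x)" "h differentiable (at x)"
  shows "pd i (\<lambda>y. f y * h y) x = pd i f x * h x + f x * pd i h x"
  using DERIV_mult[OF pd_line[OF assms(1)] pd_line[OF assms(2)], of i i]
  by (intro pd_eq) (simp add: algebra_simps)

lemma pd_add:
  assumes "f differentiable (at x)" "h differentiable (at x)"
  shows "pd i (\<lambda>y. f y + h y) x = pd i f x + pd i h x"
  using DERIV_add[OF pd_line[OF assms(1)] pd_line[OF assms(2)], of i i]
  by (intro pd_eq) (simp add: algebra_simps)

lemma pd_diff:
  assumes "f differentiable (at x)" "h differentiable (at x)"
  shows "pd i (\<lambda>y. f y - h y) x = pd i f x - pd i h x"
  using DERIV_diff[OF pd_line[OF assms(1)] pd_line[OF assms(2)], of i i]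
  by (intro pd_eq) (simp add: algebra_simps)

lemma pd_const: "pd i (\<lambda>y. c) x = 0"
  by (intro pd_eq) simp

lemma pd_cmult:
  assumes "f differentiable (at x)"
  shows "pd i (\<lambda>y. c * f y) x = c * pd i f x"
  using DERIV_cmult[OF pd_line[OF assms(1)], of c i]
  by (intro pd_eq) (simp add: algebra_simps)

lemma pd_sum:
  assumes "finite A" "\<And>a. a \<in> A \<Longrightarrow> (\<lambda>y. f y a) differentiable (at x)"
  shows "pd i (\<lambda>y. \<Sum>a\<in>A. f y a) x = (\<Sum>a\<in>A. pd i (\<lambda>y. f y a) x)"
  using assms
proof (induction A rule: finite_induct)
  case empty thus ?case by (simp add: pd_const)
next
  case (insert a A)
  have d: "(\<lambda>y. \<Sum>a\<in>A. f y a) differentiable (at x)"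
    using insert by (intro differentiable_sum) auto
  have "pd i (\<lambda>y. \<Sum>a\<in>insert a A. f y a) x = pd i (\<lambda>y. f y a + (\<Sum>a\<in>A. f y a)) x"
    using insert by simp
  also have "\<dots> = pd i (\<lambda>y. f y a) x + pd i (\<lambda>y. \<Sum>a\<in>A. f y a) x"
    using insert d by (intro pd_add) auto
  finally show ?case using insert by simp
qed

lemma pd_inverse:
  assumes "f differentiable (at x)" "f x \<noteq> 0"
  shows "pd i (\<lambda>y. 1 / f y) x = - pd i f x / (f x)^2"
  using DERIV_inverse_fun[OF pd_line[OF assms(1)], of i] assms(2)
  by (intro pd_eq) (simp add: divide_inverse power2_eq_square)

lemma pd_cong:
  assumes "open U" "x \<in> U" "\<And>y. y \<in> U \<Longrightarrow> f y = h y"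
  shows "pd i f x = pd i h x"
proof -
  obtain e where e: "e > 0" "ball x e \<subseteq> U" using assms(1,2) open_contains_ball by blast
  have "eventually (\<lambda>t. x + t *\<^sub>R axis i 1 \<in> U) (nhds 0)"
    unfolding eventually_nhds_metric
  proof (intro exI[of _ e] conjI allI impI)
    fix t :: real assume "dist t 0 < e"
    hence "x + t *\<^sub>R axis i 1 \<in> ball x e" by (simp add: dist_norm)
    thus "x + t *\<^sub>R axis i 1 \<in> U" using e by blast
  qed (use e in auto)
  hence "eventually (\<lambda>t. f (x + t *\<^sub>R axis i 1) = h (x + t *\<^sub>R axis i 1)) (nhds 0)"
    by eventually_elim (use assms(3) in auto)
  thus ?thesis unfolding pd_def by (rule deriv_cong_ev) simp
qed

lemma diff_on_at: "open U \<Longrightarrow> f differentiable_on U \<Longrightarrow> y \<in> U \<Longrightarrow> f differentiable (at y)"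
  using differentiable_on_eq_differentiable_at by blast

lemma diff_on_cong:
  assumes "open U" "\<And>y. y \<in> U \<Longrightarrow> f y = h y" "f differentiable_on U"
  shows "h differentiable_on U"
  unfolding differentiable_on_eq_differentiable_at[OF assms(1)]
proof
  fix y assume y: "y \<in> U"
  then obtain f' where "(f has_derivative f') (at y)"
    using assms(1,3) differentiable_on_eq_differentiable_at differentiable_def by blast
  hence "(h has_derivative f') (at y)"
    by (rule has_derivative_transform_within_open[OF _ assms(1) y]) (use assms(2) in auto)
  thus "h differentiable (at y)" by (auto simp: differentiable_def)
qed

lemma pds_snoc: "pds (is @ [i]) f = pds is (pd i f)"
  by (induct "is") auto

lemma pds_cong:
  assumes "open U" "\<And>y. y \<in> U \<Longrightarrow> f y = h y" "y \<in> U"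
  shows "pds is f y = pds is h y"
  using assms(3)
proof (induct "is" arbitrary: y)
  case Nil thus ?case using assms(2) by simp
next
  case (Cons i "is")
  thus ?case using pd_cong[OF assms(1) Cons(2), of "pds is f" "pds is h"] by simp
qed

definition Ck :: "(real^'n::finite) set \<Rightarrow> nat \<Rightarrow> 'n field \<Rightarrow> bool" where
  "Ck U k f \<longleftrightarrow> (\<forall>is. length is \<le> k \<longrightarrow> pds is f differentiable_on U)"

lemma Ck_0: "Ck U 0 f \<longleftrightarrow> f differentiable_on U"
  by (auto simp: Ck_def)

lemma Ck_Suc: "Ck U (Suc k) f \<longleftrightarrow> f differentiable_on U \<and> (\<forall>i. Ck U k (pd i f))"
proof safe
  assume "Ck U (Suc k) f" thus "f differentiable_on U" by (auto simp: Ck_def dest: spec[of _ "[]"])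
next
  fix i assume "Ck U (Suc k) f" thus "Ck U k (pd i f)"
    unfolding Ck_def by (metis pds_snoc length_append_singleton Suc_le_mono)
next
  assume a: "f differentiable_on U" "\<forall>i. Ck U k (pd i f)"
  show "Ck U (Suc k) f" unfolding Ck_def
  proof (intro allI impI)
    fix "is" :: "'a list" assume l: "length is \<le> Suc k"
    show "pds is f differentiable_on U"
    proof (cases "is" rule: rev_exhaust)
      case Nil thus ?thesis using a by simp
    next
      case (snoc js i)
      thus ?thesis using a l by (auto simp: pds_snoc Ck_def)
    qed
  qed
qed

lemma Ck_mono: "Ck U (Suc k) f \<Longrightarrow> Ck U k f"
  by (auto simp: Ck_def)

lemma Ck_mono': "Ck U k f \<Longrightarrow> j \<le> k \<Longrightarrow> Ck U j f"
  by (auto simp: Ck_def)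

lemma smooth_Ck: "smooth_on U f \<longleftrightarrow> (\<forall>k. Ck U k f)"
  by (auto simp: smooth_on_def Ck_def)

lemma Ck_cong:
  assumes "open U" "\<And>y. y \<in> U \<Longrightarrow> f y = h y" "Ck U k f"
  shows "Ck U k h"
  using assms(3) unfolding Ck_def
proof (intro allI impI)
  fix "is" :: "'a list" assume "\<forall>is. length is \<le> k \<longrightarrow> pds is f differentiable_on U" "length is \<le> k"
  thus "pds is h differentiable_on U"
    using diff_on_cong[OF assms(1), of "pds is f" "pds is h"] pds_cong[where f=f and h=h, OF assms(1,2)] by blast
qed

lemma Ck_const: "Ck U k (\<lambda>y. c)"
proof (induct k arbitrary: c)
  case 0 thus ?case by (simp add: Ck_0)
next
  case (Suc k)
  have pc: "pd i (\<lambda>y. c) = (\<lambda>y. 0)" for i by (rule ext) (rule pd_const)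
  show ?case unfolding Ck_Suc pc using Suc by simp
qed

lemma Ck_add:
  assumes "open U" shows "Ck U k f \<Longrightarrow> Ck U k h \<Longrightarrow> Ck U k (\<lambda>y. f y + h y)"
proof (induct k arbitrary: f h)
  case 0 thus ?case by (simp add: Ck_0)
next
  case (Suc k)
  show ?case unfolding Ck_Suc
  proof (intro conjI allI)
    show "(\<lambda>y. f y + h y) differentiable_on U" using Suc by (simp add: Ck_Suc)
    fix i
    have "Ck U k (\<lambda>y. pd i f y + pd i h y)" using Suc by (simp add: Ck_Suc)
    moreover have "pd i f y + pd i h y = pd i (\<lambda>y. f y + h y) y" if "y \<in> U" for y
      using Suc(2,3) that assms by (intro pd_add[symmetric] diff_on_at[of U]) (auto simp: Ck_Suc)
    ultimately show "Ck U k (pd i (\<lambda>y. f y + h y))" by (rule Ck_cong[OF assms, rotated])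
  qed
qed

lemma Ck_mult:
  assumes "open U" shows "Ck U k f \<Longrightarrow> Ck U k h \<Longrightarrow> Ck U k (\<lambda>y. f y * h y)"
proof (induct k arbitrary: f h)
  case 0 thus ?case by (simp add: Ck_0)
next
  case (Suc k)
  show ?case unfolding Ck_Suc
  proof (intro conjI allI)
    show "(\<lambda>y. f y * h y) differentiable_on U" using Suc by (simp add: Ck_Suc)
    fix i
    have "Ck U k (\<lambda>y. pd i f y * h y + f y * pd i h y)"
      using Suc Ck_mono[of U k f] Ck_mono[of U k h]
      by (intro Ck_add[OF assms]) (auto simp: Ck_Suc)
    moreover have "pd i f y * h y + f y * pd i h y = pd i (\<lambda>y. f y * h y) y" if "y \<in> U" for y
      using Suc(2,3) that assms by (intro pd_mult[symmetric] diff_on_at[of U]) (auto simp: Ck_Suc)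
    ultimately show "Ck U k (pd i (\<lambda>y. f y * h y))" by (rule Ck_cong[OF assms, rotated])
  qed
qed

lemma Ck_inverse:
  assumes "open U" shows "Ck U k f \<Longrightarrow> (\<And>y. y \<in> U \<Longrightarrow> f y \<noteq> 0) \<Longrightarrow> Ck U k (\<lambda>y. 1 / f y)"
proof (induct k arbitrary: f)
  case 0 thus ?case by (simp add: Ck_0 divide_inverse)
next
  case (Suc k)
  show ?case unfolding Ck_Suc
  proof (intro conjI allI)
    show "(\<lambda>y. 1 / f y) differentiable_on U" using Suc by (simp add: Ck_Suc divide_inverse)
    fix i
    have "Ck U k (\<lambda>y. 1 / f y)" using Suc Ck_mono by blast
    hence "Ck U k (\<lambda>y. ((\<lambda>y. - 1) y * pd i f y) * ((1 / f y) * (1 / f y)))"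
      using Suc by (intro Ck_mult[OF assms] Ck_const) (auto simp: Ck_Suc)
    moreover have "(- 1 * pd i f y) * ((1 / f y) * (1 / f y)) = pd i (\<lambda>y. 1 / f y) y" if "y \<in> U" for y
      using Suc(2,3) that assms
      by (subst pd_inverse) (auto simp: Ck_Suc power2_eq_square intro: diff_on_at[of U])
    ultimately show "Ck U k (pd i (\<lambda>y. 1 / f y))" by (rule Ck_cong[OF assms, rotated]) simp
  qed
qed

lemma smooth_cong: "open U \<Longrightarrow> (\<And>y. y \<in> U \<Longrightarrow> f y = h y) \<Longrightarrow> smooth_on U f \<Longrightarrow> smooth_on U h"
  unfolding smooth_Ck using Ck_cong by blast

lemma smooth_const[intro]: "smooth_on U (\<lambda>y. c)"
  unfolding smooth_Ck using Ck_const by blast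

lemma smooth_add[intro]: "open U \<Longrightarrow> smooth_on U f \<Longrightarrow> smooth_on U h \<Longrightarrow> smooth_on U (\<lambda>y. f y + h y)"
  unfolding smooth_Ck using Ck_add by blast

lemma smooth_mult[intro]: "open U \<Longrightarrow> smooth_on U f \<Longrightarrow> smooth_on U h \<Longrightarrow> smooth_on U (\<lambda>y. f y * h y)"
  unfolding smooth_Ck using Ck_mult by blast

lemma smooth_inverse: "open U \<Longrightarrow> smooth_on U f \<Longrightarrow> (\<And>y. y \<in> U \<Longrightarrow> f y \<noteq> 0) \<Longrightarrow> smooth_on U (\<lambda>y. 1 / f y)"
  unfolding smooth_Ck using Ck_inverse by blast

lemma smooth_divide: "open U \<Longrightarrow> smooth_on U h \<Longrightarrow> smooth_on U f \<Longrightarrow> (\<And>y. y \<in> U \<Longrightarrow> f y \<noteq> 0) \<Longrightarrow> smooth_on U (\<lambda>y. h y / f y)"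
  using smooth_mult[of U h "\<lambda>y. 1 / f y"] smooth_inverse[of U f] by simp

lemma smooth_minus[intro]: "open U \<Longrightarrow> smooth_on U f \<Longrightarrow> smooth_on U (\<lambda>y. - f y)"
  using smooth_mult[of U "\<lambda>y. -1" f] by auto

lemma smooth_diff[intro]: "open U \<Longrightarrow> smooth_on U f \<Longrightarrow> smooth_on U h \<Longrightarrow> smooth_on U (\<lambda>y. f y - h y)"
  using smooth_add[of U f "\<lambda>y. - h y"] smooth_minus[of U h] by auto

lemma smooth_pd[intro]: "smooth_on U f \<Longrightarrow> smooth_on U (pd i f)"
  unfolding smooth_on_def by (metis pds_snoc)

lemma smooth_sum[intro]:
  assumes "open U" "finite A" "\<And>a. a \<in> A \<Longrightarrow> smooth_on U (\<lambda>y. f y a)"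
  shows "smooth_on U (\<lambda>y. \<Sum>a\<in>A. f y a)"
  using assms(2,3) by (induct A rule: finite_induct) (auto intro: smooth_add[OF assms(1)])

lemma smooth_prod[intro]:
  assumes "open U" "finite A" "\<And>a. a \<in> A \<Longrightarrow> smooth_on U (\<lambda>y. f y a)"
  shows "smooth_on U (\<lambda>y. \<Prod>a\<in>A. f y a)"
  using assms(2,3) by (induct A rule: finite_induct) (auto intro: smooth_mult[OF assms(1)])

lemma smooth_if[intro]: "smooth_on U f \<Longrightarrow> smooth_on U h \<Longrightarrow> smooth_on U (\<lambda>y. if b then f y else h y)"
  by (cases b) auto

lemma smooth_diffat: "open U \<Longrightarrow> smooth_on U f \<Longrightarrow> y \<in> U \<Longrightarrow> f differentiable (at y)"
proof -
  assume a: "open U" "smooth_on U f" "y \<in> U"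
  have "pds [] f differentiable_on U" using a(2) unfolding smooth_on_def by (rule spec)
  hence "f differentiable_on U" by (simp only: pds.simps)
  thus ?thesis by (rule diff_on_at[OF a(1) _ a(3)])
qed

lemma pd_frechet:
  assumes F: "(f has_derivative f') (at x)"
  shows "pd i f x = f' (axis i 1)"
proof -
  have L: "((\<lambda>t::real. x + t *\<^sub>R axis i 1) has_derivative (\<lambda>t. t *\<^sub>R axis i 1)) (at 0)"
    by (auto intro!: derivative_eq_intros)
  have F0: "(f has_derivative f') (at (x + 0 *\<^sub>R axis i 1))" using F by simp
  have "((f \<circ> (\<lambda>t::real. x + t *\<^sub>R axis i 1)) has_derivative (f' \<circ> (\<lambda>t. t *\<^sub>R axis i 1))) (at 0)"
    by (rule diff_chain_at[OF L F0])
  moreover have "(f' \<circ> (\<lambda>t. t *\<^sub>R axis i 1)) = (\<lambda>t. f' (axis i 1) * t)"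
    using linear_scale[OF has_derivative_linear[OF F]] by (auto simp: o_def mult.commute)
  ultimately have D: "((\<lambda>t. f (x + t *\<^sub>R axis i 1)) has_real_derivative f' (axis i 1)) (at 0)"
    by (simp add: has_field_derivative_def o_def)
  thus "pd i f x = f' (axis i 1)" unfolding pd_def by (rule DERIV_imp_deriv)
qed

lemma pd_line_at:
  fixes f :: "'n::finite field"
  assumes "f differentiable (at (q + t0 *\<^sub>R axis i 1))"
  shows "((\<lambda>t. f (q + t *\<^sub>R axis i 1)) has_real_derivative pd i f (q + t0 *\<^sub>R axis i 1)) (at t0)"
proof -
  have "((\<lambda>s. f ((q + t0 *\<^sub>R axis i 1) + s *\<^sub>R axis i 1)) has_real_derivative pd i f (q + t0 *\<^sub>R axis i 1)) (at (0 + (t0 - t0)))"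
    using pd_line[OF assms] by simp
  hence "((\<lambda>s. f ((q + t0 *\<^sub>R axis i 1) + (s - t0) *\<^sub>R axis i 1)) has_real_derivative pd i f (q + t0 *\<^sub>R axis i 1)) (at t0)"
    using DERIV_shift[of "\<lambda>s. f ((q + t0 *\<^sub>R axis i 1) + s *\<^sub>R axis i 1)" _ t0 "- t0"] by simp
  moreover have "(\<lambda>s. f ((q + t0 *\<^sub>R axis i 1) + (s - t0) *\<^sub>R axis i 1)) = (\<lambda>t. f (q + t *\<^sub>R axis i 1))"
    by (rule ext) (simp add: algebra_simps)
  ultimately show ?thesis by simp
qed

lemma schwarz_claim:
  fixes f :: "'n::finite field"
  assumes U: "open U" "x \<in> U" and sm: "smooth_on U f"
  shows "((\<lambda>h. (f (x + h *\<^sub>R axis a 1 + h *\<^sub>R axis b 1) - f (x + h *\<^sub>R axis a 1)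
              - f (x + h *\<^sub>R axis b 1) + f x) / h^2) \<longlongrightarrow> pd b (pd a f) x) (at_right 0)"
proof -
  define ea :: "real^'n" where "ea = axis a 1"
  define eb :: "real^'n" where "eb = axis b 1"
  define D where "D = pd a f"
  obtain r where r: "r > 0" "ball x r \<subseteq> U" using U open_contains_ball by blast
  have smD: "smooth_on U D" unfolding D_def using sm by blast
  have fd: "\<And>y. y \<in> U \<Longrightarrow> f differentiable (at y)" using smooth_diffat[OF U(1) sm] .
  obtain L where L: "(D has_derivative L) (at x)"
    using smooth_diffat[OF U(1) smD U(2)] by (auto simp: differentiable_def)
  have lin: "linear L" using has_derivative_linear[OF L] .
  have pdb: "pd b D x = L eb" unfolding eb_def by (rule pd_frechet[OF L])
  show ?thesis unfolding tendsto_iff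
  proof (intro allI impI)
    fix \<epsilon> :: real assume \<epsilon>: "\<epsilon> > 0"
    obtain d where d: "d > 0" "\<And>y. norm (y - x) < d \<Longrightarrow> norm (D y - D x - L (y - x)) \<le> (\<epsilon>/4) * norm (y - x)"
      using L \<epsilon> unfolding has_derivative_at_alt by (metis divide_pos_pos zero_less_numeral)
    define \<delta> where "\<delta> = min d r / 2"
    have \<delta>: "\<delta> > 0" using d r by (simp add: \<delta>_def)
    have \<delta>r: "\<delta> \<le> r/2" "\<delta> \<le> d/2" by (auto simp: \<delta>_def)
    show "eventually (\<lambda>h. dist ((f (x + h *\<^sub>R axis a 1 + h *\<^sub>R axis b 1) - f (x + h *\<^sub>R axis a 1)
              - f (x + h *\<^sub>R axis b 1) + f x) / h^2) (pd b (pd a f) x) < \<epsilon>) (at_right 0)"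
      unfolding eventually_at_right_field
    proof (intro exI[of _ \<delta>] conjI allI impI)
      show "0 < \<delta>" by (rule \<delta>)
      fix h :: real assume h: "0 < h" "h < \<delta>"
      define \<phi> where "\<phi> t = f ((x + h *\<^sub>R eb) + t *\<^sub>R ea) - f (x + t *\<^sub>R ea)" for t
      have inU: "x + t *\<^sub>R ea + s *\<^sub>R eb \<in> U" if "\<bar>t\<bar> \<le> h" "\<bar>s\<bar> \<le> h" for t s
      proof -
        have "norm (t *\<^sub>R ea + s *\<^sub>R eb) \<le> norm (t *\<^sub>R ea) + norm (s *\<^sub>R eb)" by (rule norm_triangle_ineq)
        also have "\<dots> = \<bar>t\<bar> + \<bar>s\<bar>" by (simp add: ea_def eb_def)
        also have "\<dots> < r" using that h \<delta>r by linarith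
        finally have "x + t *\<^sub>R ea + s *\<^sub>R eb \<in> ball x r"
          by (simp add: dist_norm add.assoc) (metis add.commute diff_add_cancel norm_minus_commute add_diff_cancel_right' minus_diff_eq)
        thus ?thesis using r by blast
      qed
      have dphi: "(\<phi> has_real_derivative (D ((x + h *\<^sub>R eb) + t *\<^sub>R ea) - D (x + t *\<^sub>R ea))) (at t)"
        if "\<bar>t\<bar> \<le> h" for t
      proof -
        have p1: "x + t *\<^sub>R ea + h *\<^sub>R eb = (x + h *\<^sub>R eb) + t *\<^sub>R ea" by (simp add: algebra_simps)
        have d1: "((\<lambda>t. f ((x + h *\<^sub>R eb) + t *\<^sub>R ea)) has_real_derivative D ((x + h *\<^sub>R eb) + t *\<^sub>R ea)) (at t)"
          unfolding D_def ea_def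
          by (rule pd_line_at, rule fd) (use inU[OF that, of h] h p1 in \<open>simp add: ea_def algebra_simps\<close>)
        have d2: "((\<lambda>t. f (x + t *\<^sub>R ea)) has_real_derivative D (x + t *\<^sub>R ea)) (at t)"
          unfolding D_def ea_def
          by (rule pd_line_at, rule fd) (use inU[OF that, of 0] h in \<open>simp add: ea_def\<close>)
        show ?thesis using DERIV_diff[OF d1 d2] unfolding \<phi>_def[abs_def] by simp
      qed
      have "\<exists>l z. 0 < z \<and> z < h \<and> DERIV \<phi> z :> l \<and> \<phi> h - \<phi> 0 = (h - 0) * l"
      proof (rule MVT[OF h(1)])
        show "continuous_on {0..h} \<phi>"
        proof (intro continuous_at_imp_continuous_on ballI)
          fix t assume "t \<in> {0..h}"
          hence "\<bar>t\<bar> \<le> h" by auto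
          from DERIV_continuous[OF dphi[OF this]] show "isCont \<phi> t" .
        qed
        show "\<And>t. 0 < t \<Longrightarrow> t < h \<Longrightarrow> \<phi> differentiable (at t)"
          using dphi by (metis abs_of_pos less_eq_real_def real_differentiable_def)
      qed
      then obtain l \<theta> where th: "0 < \<theta>" "\<theta> < h" "DERIV \<phi> \<theta> :> l" "\<phi> h - \<phi> 0 = h * l" by auto
      have l: "l = D ((x + h *\<^sub>R eb) + \<theta> *\<^sub>R ea) - D (x + \<theta> *\<^sub>R ea)"
        using DERIV_unique[OF th(3) dphi[of \<theta>]] th by simp
      have num: "f (x + h *\<^sub>R axis a 1 + h *\<^sub>R axis b 1) - f (x + h *\<^sub>R axis a 1)
              - f (x + h *\<^sub>R axis b 1) + f x = h * l"
        using th(4) by (simp add: \<phi>_def ea_def eb_def algebra_simps)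
      define v1 where "v1 = \<theta> *\<^sub>R ea + h *\<^sub>R eb"
      define v2 where "v2 = \<theta> *\<^sub>R ea"
      have nv1: "norm v1 \<le> \<theta> + h"
        unfolding v1_def using norm_triangle_ineq[of "\<theta> *\<^sub>R ea" "h *\<^sub>R eb"] th h
        by (simp add: ea_def eb_def)
      have nv2: "norm v2 = \<theta>" using th by (simp add: v2_def ea_def)
      have b1: "norm (D (x + v1) - D x - L v1) \<le> (\<epsilon>/4) * norm v1"
        using d(2)[of "x + v1"] nv1 th h \<delta>r by simp
      have b2: "norm (D (x + v2) - D x - L v2) \<le> (\<epsilon>/4) * norm v2"
        using d(2)[of "x + v2"] nv2 th h \<delta>r by simp
      have Lv: "L v1 - L v2 = h * L eb"
        unfolding v1_def v2_def using linear_add[OF lin] linear_scale[OF lin] by simp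
      have l2: "l = D (x + v1) - D (x + v2)" unfolding l v1_def v2_def by (simp add: algebra_simps)
      have "\<bar>l - h * L eb\<bar> \<le> (\<epsilon>/4) * (\<theta> + h) + (\<epsilon>/4) * \<theta>"
      proof -
        have "\<bar>l - h * L eb\<bar> = \<bar>(D (x + v1) - D x - L v1) - (D (x + v2) - D x - L v2)\<bar>"
          unfolding l2 Lv[symmetric] by simp
        also have "\<dots> \<le> \<bar>D (x + v1) - D x - L v1\<bar> + \<bar>D (x + v2) - D x - L v2\<bar>" by simp
        also have "\<dots> \<le> (\<epsilon>/4) * (\<theta> + h) + (\<epsilon>/4) * \<theta>"
          using b1 b2 nv1 nv2 \<epsilon> by (smt (verit) mult_left_mono real_norm_def zero_le_divide_iff)
        finally show ?thesis .
      qed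
      also have "\<dots> = (\<epsilon>/4) * (2*\<theta> + h)" by (simp add: field_simps)
      also have "\<dots> < (\<epsilon>/4) * (3*h)" using th \<epsilon> by (intro mult_strict_left_mono) auto
      also have "\<dots> \<le> \<epsilon> * h" using \<epsilon> h by simp
      finally have "\<bar>l - h * L eb\<bar> < \<epsilon> * h" .
      moreover have "\<bar>l - h * L eb\<bar> = h * \<bar>l / h - L eb\<bar>"
      proof -
        have "l - h * L eb = h * (l / h - L eb)" using h by (simp add: field_simps)
        thus ?thesis using h by (simp add: abs_mult)
      qed
      ultimately have "\<bar>l / h - L eb\<bar> < \<epsilon>" using h by simp
      moreover have "(h * l) / h^2 = l / h" using h by (simp add: power2_eq_square)
      ultimately show "dist ((f (x + h *\<^sub>R axis a 1 + h *\<^sub>R axis b 1) - f (x + h *\<^sub>R axis a 1)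
              - f (x + h *\<^sub>R axis b 1) + f x) / h^2) (pd b (pd a f) x) < \<epsilon>"
        unfolding num dist_real_def using pdb by (simp add: D_def)
    qed
  qed
qed

lemma schwarz:
  fixes f :: "'n::finite field"
  assumes "open U" "x \<in> U" "smooth_on U f"
  shows "pd a (pd b f) x = pd b (pd a f) x"
proof -
  have "\<And>h. f (x + h *\<^sub>R axis a 1 + h *\<^sub>R axis b 1) = f (x + h *\<^sub>R axis b 1 + h *\<^sub>R axis a 1)"
    by (simp add: algebra_simps)
  hence "((\<lambda>h. (f (x + h *\<^sub>R axis a 1 + h *\<^sub>R axis b 1) - f (x + h *\<^sub>R axis a 1)
              - f (x + h *\<^sub>R axis b 1) + f x) / h^2) \<longlongrightarrow> pd a (pd b f) x) (at_right 0)"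
    using schwarz_claim[OF assms, of b a] by (simp add: algebra_simps)
  from tendsto_unique[OF _ this schwarz_claim[OF assms, of a b]] show ?thesis by simp
qed

lemma matrix_inv_props:
  fixes M :: "real^'n::finite^'n"
  assumes "det M \<noteq> 0"
  shows "M ** matrix_inv M = mat 1" "matrix_inv M ** M = mat 1"
proof -
  have "invertible M" using assms invertible_det_nz by blast
  then have "\<exists>A'. M ** A' = mat 1 \<and> A' ** M = mat 1" unfolding invertible_def .
  from someI_ex[OF this] show "M ** matrix_inv M = mat 1" "matrix_inv M ** M = mat 1"
    unfolding matrix_inv_def by auto
qed

lemma matrix_inv_sym:
  fixes M :: "real^'n::finite^'n"
  assumes "det M \<noteq> 0" "transpose M = M"
  shows "transpose (matrix_inv M) = matrix_inv M"
proof -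
  let ?I = "matrix_inv M"
  have "transpose ?I ** M = mat 1"
    using arg_cong[OF matrix_inv_props(1)[OF assms(1)], of transpose]
    by (simp add: matrix_transpose_mul assms(2))
  hence "transpose ?I = (transpose ?I ** M) ** ?I"
    by (metis matrix_inv_props(1)[OF assms(1)] matrix_mul_assoc matrix_mul_rid)
  thus ?thesis using \<open>transpose ?I ** M = mat 1\<close> by simp
qed

lemma matrix_inv_cramer:
  fixes M :: "real^'n::finite^'n"
  assumes "det M \<noteq> 0"
  shows "matrix_inv M $ k $ j = det (\<chi> a c. if c = k then (if a = j then 1 else 0) else M $ a $ c) / det M"
proof -
  let ?b = "(\<chi> a. if a = j then 1 else 0) :: real^'n"
  let ?x = "(\<chi> k. matrix_inv M $ k $ j) :: real^'n"
  have "(M *v ?x) $ i = (M ** matrix_inv M) $ i $ j" for i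
    by (simp add: matrix_vector_mult_def matrix_matrix_mult_def)
  hence "M *v ?x = ?b" unfolding matrix_inv_props(1)[OF assms]
    by (simp add: vec_eq_iff mat_def)
  hence "?x = (\<chi> k. det(\<chi> i c. if c=k then ?b$i else M$i$c) / det M)"
    using cramer[OF assms] by blast
  hence "?x $ k = det(\<chi> i c. if c=k then ?b$i else M$i$c) / det M" by simp
  thus ?thesis by (simp cong: if_cong)
qed

lemma smooth_det:
  assumes "open U" "\<And>a c. smooth_on U (\<lambda>y. E y a c)"
  shows "smooth_on U (\<lambda>y. det (\<chi> a c. E y a c :: real^'n::finite^'n))"
  unfolding det_def using assms
  by (auto intro!: smooth_sum smooth_mult smooth_prod simp: finite_permutations)

locale chart =
  fixes U :: "(real^'n::finite) set" and g :: "real^'n \<Rightarrow> 'n \<Rightarrow> 'n \<Rightarrow> real"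
  assumes prc: "pseudo_riemannian_chart U g"
begin

lemma U_open: "open U" and g_smooth: "smooth_on U (\<lambda>x. g x i j)"
  and g_sym: "y \<in> U \<Longrightarrow> g y i j = g y j i" and g_det: "y \<in> U \<Longrightarrow> det (\<chi> i j. g y i j) \<noteq> 0"
  using prc unfolding pseudo_riemannian_chart_def by auto

lemma ginv_mat: "ginv g y i j = matrix_inv (\<chi> a b. g y a b) $ i $ j"
  by (simp add: ginv_def)

lemma ginv_left: "y \<in> U \<Longrightarrow> (\<Sum>l\<in>UNIV. ginv g y i l * g y l j) = (if i = j then 1 else 0)"
  using arg_cong[OF matrix_inv_props(2)[OF g_det[of y]], of "\<lambda>A. A $ i $ j"]
  by (simp add: matrix_matrix_mult_def mat_def ginv_def)

lemma ginv_right: "y \<in> U \<Longrightarrow> (\<Sum>l\<in>UNIV. g y i l * ginv g y l j) = (if i = j then 1 else 0)"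
  using arg_cong[OF matrix_inv_props(1)[OF g_det[of y]], of "\<lambda>A. A $ i $ j"]
  by (simp add: matrix_matrix_mult_def mat_def ginv_def)

lemma ginv_sym: "y \<in> U \<Longrightarrow> ginv g y i j = ginv g y j i"
proof -
  assume y: "y \<in> U"
  have "transpose (\<chi> a b. g y a b) = (\<chi> a b. g y a b)"
    using g_sym[OF y] by (simp add: transpose_def vec_eq_iff)
  from arg_cong[OF matrix_inv_sym[OF g_det[OF y] this], of "\<lambda>A. A $ i $ j"]
  show ?thesis by (simp add: transpose_def ginv_def)
qed

lemma ginv_smooth: "smooth_on U (\<lambda>y. ginv g y k j)"
proof (rule smooth_cong[OF U_open])
  show "smooth_on U (\<lambda>y. det (\<chi> a c. if c = k then (if a = j then 1 else 0) else g y a c :: real^'n^'n)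
        / det (\<chi> a c. g y a c :: real^'n^'n))"
    using g_det by (intro smooth_divide U_open smooth_det) (auto intro: g_smooth)
  fix y assume "y \<in> U"
  thus "det (\<chi> a c. if c = k then (if a = j then 1 else 0) else g y a c :: real^'n^'n)
        / det (\<chi> a c. g y a c :: real^'n^'n) = ginv g y k j"
    using matrix_inv_cramer[OF g_det, of y k j] by (simp only: ginv_def vec_lambda_beta)
qed

end

context chart begin

abbreviation "dg y k i j \<equiv> pd k (\<lambda>y. g y i j) y"
abbreviation "ddg y a b c d \<equiv> pd a (\<lambda>y. pd b (\<lambda>y. g y c d) y) y"

definition Lc :: "real^'n \<Rightarrow> 'n \<Rightarrow> 'n \<Rightarrow> 'n \<Rightarrow> real" where
  "Lc y e a b = (1/2) * (dg y a b e + dg y b a e - dg y e a b)"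

lemma finU: "finite (UNIV :: 'n set)" by simp

lemma smooth_divc: "smooth_on U f \<Longrightarrow> smooth_on U (\<lambda>y. f y / c)"
  using smooth_mult[OF U_open, of f "\<lambda>y. 1 / c"] by (simp add: smooth_const)

lemma delta_mult[simp]: "(if c then 1 else 0) * (x::real) = (if c then x else 0)"
  "(x::real) * (if c then 1 else 0) = (if c then x else 0)" by auto

lemmas smI = smooth_divc smooth_add[OF U_open] smooth_mult[OF U_open] smooth_diff[OF U_open]
  smooth_minus[OF U_open] smooth_sum[OF U_open] smooth_const smooth_pd g_smooth ginv_smooth finU

lemma dg_sym: "y \<in> U \<Longrightarrow> dg y k i j = dg y k j i"
  by (rule pd_cong[OF U_open]) (auto intro: g_sym)

lemma ddg_sym2: "y \<in> U \<Longrightarrow> ddg y a b c d = ddg y a b d c"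
  by (rule pd_cong[OF U_open]) (auto intro: dg_sym)

lemma ddg_sym1: "y \<in> U \<Longrightarrow> ddg y a b c d = ddg y b a c d"
  by (rule schwarz[OF U_open]) (auto intro: g_smooth)

lemma Lc_sym: "y \<in> U \<Longrightarrow> Lc y e a b = Lc y e b a"
  using dg_sym[of y] by (simp add: Lc_def algebra_simps)

lemma chr_L: "christoffel g y k i j = (\<Sum>l\<in>UNIV. ginv g y k l * Lc y l i j)"
  unfolding christoffel_def Lc_def by (simp add: sum_distrib_left algebra_simps)

lemma chr_sym: "y \<in> U \<Longrightarrow> christoffel g y k i j = christoffel g y k j i"
  unfolding chr_L using Lc_sym by simp

lemma low_chr: "y \<in> U \<Longrightarrow> (\<Sum>e\<in>UNIV. g y a e * christoffel g y e i j) = Lc y a i j"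
proof -
  assume y: "y \<in> U"
  have "(\<Sum>e\<in>UNIV. g y a e * christoffel g y e i j) = (\<Sum>e\<in>UNIV. \<Sum>l\<in>UNIV. g y a e * ginv g y e l * Lc y l i j)"
    by (simp add: chr_L sum_distrib_left mult.assoc)
  also have "\<dots> = (\<Sum>l\<in>UNIV. \<Sum>e\<in>UNIV. g y a e * ginv g y e l * Lc y l i j)" by (rule sum.swap)
  also have "\<dots> = (\<Sum>l\<in>UNIV. (\<Sum>e\<in>UNIV. g y a e * ginv g y e l) * Lc y l i j)" by (simp add: sum_distrib_right)
  also have "\<dots> = Lc y a i j" using ginv_right[OF y] by (simp add: sum.delta)
  finally show ?thesis .
qed

lemma dg_L: "y \<in> U \<Longrightarrow> dg y k a b = Lc y b k a + Lc y a k b"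
  unfolding Lc_def using dg_sym[of y] by (simp add: algebra_simps)

lemma chr_smooth: "smooth_on U (\<lambda>y. christoffel g y k i j)"
  unfolding christoffel_def by (intro smI)

lemma Lc_smooth: "smooth_on U (\<lambda>y. Lc y e a b)"
  unfolding Lc_def by (intro smI)

lemma riemann_up_smooth: "smooth_on U (\<lambda>y. riemann_up g y d c a b)"
  unfolding riemann_up_def by (intro smI chr_smooth)

lemma riemann_smooth: "smooth_on U (\<lambda>y. riemann g y j k l m)"
  unfolding riemann_def by (intro smI riemann_up_smooth)

lemma ricci_smooth: "smooth_on U (\<lambda>y. ricci g y k l)"
  unfolding ricci_def by (intro smI riemann_smooth)

lemma scal_smooth: "smooth_on U (\<lambda>y. scalar_curv g y)"
  unfolding scalar_curv_def by (intro smI ricci_smooth)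

lemma weyl_smooth: "smooth_on U (\<lambda>y. weyl g y j k l m)"
  unfolding weyl_def Let_def by (intro smI riemann_smooth ricci_smooth scal_smooth)

lemma weyl_sq_smooth: "smooth_on U (\<lambda>y. weyl_sq g y p r)"
  unfolding weyl_sq_def by (intro smI weyl_smooth)

lemma weyl_sq_trace_smooth: "smooth_on U (\<lambda>y. weyl_sq_trace g y)"
  unfolding weyl_sq_trace_def by (intro smI weyl_sq_smooth)

lemma da: "smooth_on U f \<Longrightarrow> y \<in> U \<Longrightarrow> f differentiable (at y)"
  by (rule smooth_diffat[OF U_open])

lemma pd_Lc: "y \<in> U \<Longrightarrow> pd l (\<lambda>z. Lc z j m k) y = 1/2 * (ddg y l m k j + ddg y l k m j - ddg y l j m k)"
proof -
  assume y: "y \<in> U"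
  have d: "\<And>a b c. (\<lambda>z. dg z a b c) differentiable (at y)" by (rule da[OF _ y]) (intro smI)
  show ?thesis unfolding Lc_def
    by (subst pd_cmult, (intro derivative_intros d)+, subst pd_diff, (intro derivative_intros d)+,
        subst pd_add, (intro d)+, simp)
qed

lemma P1: "y \<in> U \<Longrightarrow> (\<Sum>e\<in>UNIV. g y j e * pd l (\<lambda>z. christoffel g z e m k) y)
    = pd l (\<lambda>z. Lc z j m k) y - (\<Sum>e\<in>UNIV. dg y l j e * christoffel g y e m k)"
proof -
  assume y: "y \<in> U"
  have "pd l (\<lambda>z. \<Sum>e\<in>UNIV. g z j e * christoffel g z e m k) y
      = (\<Sum>e\<in>UNIV. pd l (\<lambda>z. g z j e * christoffel g z e m k) y)"
    by (rule pd_sum) (auto intro!: da[OF _ y] smI chr_smooth)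
  also have "\<dots> = (\<Sum>e\<in>UNIV. dg y l j e * christoffel g y e m k + g y j e * pd l (\<lambda>z. christoffel g z e m k) y)"
    by (rule sum.cong[OF refl], rule pd_mult) (auto intro!: da[OF _ y] smI chr_smooth)
  finally have 1: "pd l (\<lambda>z. \<Sum>e\<in>UNIV. g z j e * christoffel g z e m k) y = \<dots>" .
  have 2: "pd l (\<lambda>z. \<Sum>e\<in>UNIV. g z j e * christoffel g z e m k) y = pd l (\<lambda>z. Lc z j m k) y"
    by (rule pd_cong[OF U_open y]) (rule low_chr)
  show ?thesis using 1 2 by (simp add: sum.distrib)
qed

lemma P3: "y \<in> U \<Longrightarrow> (\<Sum>e\<in>UNIV. g y j e * (\<Sum>a\<in>UNIV. christoffel g y e l a * christoffel g y a m k))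
    = (\<Sum>a\<in>UNIV. Lc y j l a * christoffel g y a m k)"
proof -
  assume y: "y \<in> U"
  have "(\<Sum>e\<in>UNIV. g y j e * (\<Sum>a\<in>UNIV. christoffel g y e l a * christoffel g y a m k))
     = (\<Sum>e\<in>UNIV. \<Sum>a\<in>UNIV. g y j e * christoffel g y e l a * christoffel g y a m k)"
    by (simp add: sum_distrib_left mult.assoc)
  also have "\<dots> = (\<Sum>a\<in>UNIV. \<Sum>e\<in>UNIV. g y j e * christoffel g y e l a * christoffel g y a m k)"
    by (rule sum.swap)
  also have "\<dots> = (\<Sum>a\<in>UNIV. (\<Sum>e\<in>UNIV. g y j e * christoffel g y e l a) * christoffel g y a m k)"
    by (simp add: sum_distrib_right)
  finally show ?thesis using low_chr[OF y] by simp
qed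

lemma P4: "y \<in> U \<Longrightarrow> (\<Sum>e\<in>UNIV. dg y l j e * christoffel g y e m k)
   = (\<Sum>e\<in>UNIV. \<Sum>b\<in>UNIV. ginv g y e b * (Lc y e l j * Lc y b m k))
     + (\<Sum>a\<in>UNIV. Lc y j l a * christoffel g y a m k)"
proof -
  assume y: "y \<in> U"
  have "(\<Sum>e\<in>UNIV. dg y l j e * christoffel g y e m k)
     = (\<Sum>e\<in>UNIV. Lc y e l j * christoffel g y e m k) + (\<Sum>e\<in>UNIV. Lc y j l e * christoffel g y e m k)"
    using dg_L[OF y] by (simp add: sum.distrib algebra_simps)
  moreover have "(\<Sum>e\<in>UNIV. Lc y e l j * christoffel g y e m k)
     = (\<Sum>e\<in>UNIV. \<Sum>b\<in>UNIV. ginv g y e b * (Lc y e l j * Lc y b m k))"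
    by (simp add: chr_L sum_distrib_left algebra_simps)
  ultimately show ?thesis by simp
qed

lemma riemann_formula: "y \<in> U \<Longrightarrow> riemann g y j k l m =
   1/2 * (ddg y l k m j - ddg y l j m k - ddg y m k l j + ddg y m j l k)
   + (\<Sum>e\<in>UNIV. \<Sum>b\<in>UNIV. ginv g y e b * (Lc y e m j * Lc y b l k - Lc y e l j * Lc y b m k))"
proof -
  assume y: "y \<in> U"
  have "riemann g y j k l m =
      (\<Sum>e\<in>UNIV. g y j e * pd l (\<lambda>z. christoffel g z e m k) y)
    - (\<Sum>e\<in>UNIV. g y j e * pd m (\<lambda>z. christoffel g z e l k) y)
    + (\<Sum>e\<in>UNIV. g y j e * (\<Sum>a\<in>UNIV. christoffel g y e l a * christoffel g y a m k))
    - (\<Sum>e\<in>UNIV. g y j e * (\<Sum>a\<in>UNIV. christoffel g y e m a * christoffel g y a l k))"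
    unfolding riemann_def riemann_up_def
    by (simp add: sum.distrib sum_subtractf algebra_simps)
  also have "\<dots> = pd l (\<lambda>z. Lc z j m k) y - pd m (\<lambda>z. Lc z j l k) y
    - (\<Sum>e\<in>UNIV. \<Sum>b\<in>UNIV. ginv g y e b * (Lc y e l j * Lc y b m k))
    + (\<Sum>e\<in>UNIV. \<Sum>b\<in>UNIV. ginv g y e b * (Lc y e m j * Lc y b l k))"
    unfolding P1[OF y] P3[OF y] P4[OF y] by simp
  also have "\<dots> = 1/2 * (ddg y l k m j - ddg y l j m k - ddg y m k l j + ddg y m j l k)
   + (\<Sum>e\<in>UNIV. \<Sum>b\<in>UNIV. ginv g y e b * (Lc y e m j * Lc y b l k - Lc y e l j * Lc y b m k))"
    unfolding pd_Lc[OF y] using ddg_sym1[OF y, of l m k j]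
    by (simp add: sum_subtractf algebra_simps)
  finally show ?thesis .
qed

end

context chart begin

definition TT :: "real^'n \<Rightarrow> ('n \<Rightarrow> real) \<Rightarrow> ('n \<Rightarrow> real) \<Rightarrow> real" where
  "TT y X Y = (\<Sum>e\<in>UNIV. \<Sum>b\<in>UNIV. ginv g y e b * (X e * Y b))"

lemma TT_sym: "y \<in> U \<Longrightarrow> TT y X Y = TT y Y X"
proof -
  assume y: "y \<in> U"
  have "TT y X Y = (\<Sum>b\<in>UNIV. \<Sum>e\<in>UNIV. ginv g y e b * (X e * Y b))" unfolding TT_def by (rule sum.swap)
  also have "\<dots> = TT y Y X" unfolding TT_def using ginv_sym[OF y] by (simp add: mult.commute)
  finally show ?thesis .
qed

lemma riemann_TT: "y \<in> U \<Longrightarrow> riemann g y j k l m =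
   1/2 * (ddg y l k m j - ddg y l j m k - ddg y m k l j + ddg y m j l k)
   + TT y (\<lambda>e. Lc y e m j) (\<lambda>b. Lc y b l k) - TT y (\<lambda>e. Lc y e l j) (\<lambda>b. Lc y b m k)"
  unfolding riemann_formula TT_def by (simp add: sum_subtractf right_diff_distrib)

lemma R_anti_lm: "y \<in> U \<Longrightarrow> riemann g y j k l m = - riemann g y j k m l"
  unfolding riemann_TT by (simp add: algebra_simps)

lemma R_anti_jk: "y \<in> U \<Longrightarrow> riemann g y j k l m = - riemann g y k j l m"
  unfolding riemann_TT by (simp add: algebra_simps TT_sym[of y "\<lambda>e. Lc y e m k"] TT_sym[of y "\<lambda>e. Lc y e l k"])

lemma R_pair: "y \<in> U \<Longrightarrow> riemann g y j k l m = riemann g y l m j k"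
proof -
  assume y: "y \<in> U"
  have e1: "ddg y j m k l = ddg y m j l k" using ddg_sym1[OF y, of j m k l] ddg_sym2[OF y, of m j k l] by simp
  have e2: "ddg y j l k m = ddg y l j m k" using ddg_sym1[OF y, of j l k m] ddg_sym2[OF y, of l j k m] by simp
  have e3: "ddg y k m j l = ddg y m k l j" using ddg_sym1[OF y, of k m j l] ddg_sym2[OF y, of m k j l] by simp
  have e4: "ddg y k l j m = ddg y l k m j" using ddg_sym1[OF y, of k l j m] ddg_sym2[OF y, of l k j m] by simp
  have f: "(\<lambda>e. Lc y e a b) = (\<lambda>e. Lc y e b a)" for a b using Lc_sym[OF y] by auto
  have t1: "TT y (\<lambda>e. Lc y e k l) (\<lambda>b. Lc y b j m) = TT y (\<lambda>e. Lc y e m j) (\<lambda>b. Lc y b l k)"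
    using TT_sym[OF y, of "\<lambda>e. Lc y e m j" "\<lambda>b. Lc y b l k"] f[of k l] f[of j m] by simp
  have t2: "TT y (\<lambda>e. Lc y e j l) (\<lambda>b. Lc y b k m) = TT y (\<lambda>e. Lc y e l j) (\<lambda>b. Lc y b m k)"
    using f[of j l] f[of k m] by simp
  show ?thesis unfolding riemann_TT[OF y] e1 e2 e3 e4 t1 t2 by simp
qed

lemma R_bianchi: "y \<in> U \<Longrightarrow> riemann g y j k l m + riemann g y j l m k + riemann g y j m k l = 0"
proof -
  assume y: "y \<in> U"
  have e: "ddg y a b c d = ddg y b a c d" for a b c d using ddg_sym1[OF y] .
  have f: "(\<lambda>e. Lc y e a b) = (\<lambda>e. Lc y e b a)" for a b using Lc_sym[OF y] by auto
  show ?thesis unfolding riemann_TT[OF y] using ddg_sym2[OF y, of k j m l] ddg_sym2[OF y, of l j k m] ddg_sym2[OF y, of m j l k] e[of k l m j] e[of l m k j] e[of m k l j] f[of k l] f[of l m] f[of m k]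
    by (simp add: algebra_simps)
qed


lemma R_swap2: "y \<in> U \<Longrightarrow> riemann g y k j m l = riemann g y j k l m"
  using R_anti_jk[of y k j m l] R_anti_lm[of y j k m l] by simp

lemma ricci_sym: "y \<in> U \<Longrightarrow> ricci g y k l = ricci g y l k"
proof -
  assume y: "y \<in> U"
  have "ricci g y l k = - (\<Sum>m\<in>UNIV. \<Sum>j\<in>UNIV. ginv g y m j * riemann g y j k l m)"
    unfolding ricci_def using R_pair[OF y, of _ l k] R_swap2[OF y] by simp
  also have "\<dots> = - (\<Sum>j\<in>UNIV. \<Sum>m\<in>UNIV. ginv g y m j * riemann g y j k l m)"
    by (subst sum.swap) simp
  also have "\<dots> = ricci g y k l" unfolding ricci_def using ginv_sym[OF y] by simp
  finally show ?thesis ..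
qed

definition "wc1 = 1 / (real CARD('n) - 2)"
definition "wc2 y = scalar_curv g y / ((real CARD('n) - 1) * (real CARD('n) - 2))"

lemma weyl_alt: "weyl g y j k l m = riemann g y j k l m
     + wc1 * (g y m j * ricci g y k l - g y m k * ricci g y j l + ricci g y m j * g y k l - ricci g y m k * g y j l)
     - wc2 y * (g y m j * g y k l - g y m k * g y j l)"
  unfolding weyl_def Let_def wc1_def wc2_def by simp

lemma W_anti_jk: "y \<in> U \<Longrightarrow> weyl g y j k l m = - weyl g y k j l m"
  unfolding weyl_alt using R_anti_jk[of y j k l m] by (simp add: algebra_simps)

lemma W_anti_lm: "y \<in> U \<Longrightarrow> weyl g y j k l m = - weyl g y j k m l"
  unfolding weyl_alt using R_anti_lm[of y j k l m] g_sym[of y] ricci_sym[of y]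
  by (simp add: algebra_simps)

lemma W_pair: "y \<in> U \<Longrightarrow> weyl g y j k l m = weyl g y l m j k"
  unfolding weyl_alt using R_pair[of y j k l m] g_sym[of y] ricci_sym[of y]
  by (simp add: algebra_simps)

lemma W_bianchi: "y \<in> U \<Longrightarrow> weyl g y j k l m + weyl g y j l m k + weyl g y j m k l = 0"
proof -
  assume y: "y \<in> U"
  have "riemann g y j k l m + riemann g y j l m k + riemann g y j m k l = 0" by (rule R_bianchi[OF y])
  thus ?thesis unfolding weyl_alt using g_sym[OF y] ricci_sym[OF y]
    by (simp add: algebra_simps)
qed


lemma W_trace:
  assumes n3: "CARD('n) \<ge> 3" and y: "y \<in> U"
  shows "(\<Sum>a\<in>UNIV. \<Sum>b\<in>UNIV. ginv g y a b * weyl g y k a b m) = 0"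
proof -
  let ?G = "ginv g y" and ?R = "riemann g y" and ?Ric = "ricci g y" and ?s = "scalar_curv g y"
  let ?n = "real CARD('n)"
  have t1: "(\<Sum>a\<in>UNIV. \<Sum>b\<in>UNIV. ?G a b * ?R k a b m) = - ?Ric k m"
    unfolding ricci_def using R_swap2[OF y, of k a b m for a b] by simp
  have t2: "(\<Sum>a\<in>UNIV. \<Sum>b\<in>UNIV. ?G a b * ?Ric a b) = ?s" unfolding scalar_curv_def ..
  have t3: "(\<Sum>a\<in>UNIV. \<Sum>b\<in>UNIV. ?G a b * g y m a * ?Ric k b) = ?Ric k m"
  proof -
    have "(\<Sum>a\<in>UNIV. \<Sum>b\<in>UNIV. ?G a b * g y m a * ?Ric k b) = (\<Sum>b\<in>UNIV. \<Sum>a\<in>UNIV. ?G a b * g y m a * ?Ric k b)"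
      by (rule sum.swap)
    also have "\<dots> = (\<Sum>b\<in>UNIV. (\<Sum>a\<in>UNIV. g y m a * ?G a b) * ?Ric k b)"
      by (simp add: sum_distrib_right sum_distrib_left algebra_simps)
    finally show ?thesis using ginv_right[OF y] by (simp add: sum.delta)
  qed
  have t4: "(\<Sum>a\<in>UNIV. \<Sum>b\<in>UNIV. ?G a b * g y a b) = ?n"
  proof -
    have "(\<Sum>b\<in>UNIV. ?G a b * g y a b) = 1" for a
      using ginv_left[OF y, of a a] g_sym[OF y, of a] by simp
    thus ?thesis by simp
  qed
  have t5: "(\<Sum>a\<in>UNIV. \<Sum>b\<in>UNIV. ?G a b * ?Ric m a * g y k b) = ?Ric m k"
  proof -
    have "(\<Sum>b\<in>UNIV. ?G a b * ?Ric m a * g y k b) = ?Ric m a * (if a = k then 1 else 0)" for a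
    proof -
      have "(\<Sum>b\<in>UNIV. ?G a b * ?Ric m a * g y k b) = ?Ric m a * (\<Sum>b\<in>UNIV. ?G a b * g y b k)"
        using g_sym[OF y, of k] by (simp add: sum_distrib_left algebra_simps)
      thus ?thesis using ginv_left[OF y, of a k] by simp
    qed
    thus ?thesis by (simp add: sum.delta')
  qed
  have t6: "(\<Sum>a\<in>UNIV. \<Sum>b\<in>UNIV. ?G a b * g y m a * g y k b) = g y k m"
  proof -
    have "(\<Sum>a\<in>UNIV. \<Sum>b\<in>UNIV. ?G a b * g y m a * g y k b) = (\<Sum>b\<in>UNIV. \<Sum>a\<in>UNIV. ?G a b * g y m a * g y k b)"
      by (rule sum.swap)
    also have "\<dots> = (\<Sum>b\<in>UNIV. (\<Sum>a\<in>UNIV. g y m a * ?G a b) * g y k b)"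
      by (simp add: sum_distrib_right sum_distrib_left algebra_simps)
    finally show ?thesis using ginv_right[OF y] by (simp add: sum.delta)
  qed
  have pw: "?G a b * weyl g y k a b m = ?G a b * ?R k a b m
     + wc1 * (g y m k * (?G a b * ?Ric a b) - ?G a b * g y m a * ?Ric k b + ?Ric m k * (?G a b * g y a b) - ?G a b * ?Ric m a * g y k b)
     - wc2 y * (g y m k * (?G a b * g y a b) - ?G a b * g y m a * g y k b)" for a b
    unfolding weyl_alt by (simp add: algebra_simps)
  have "(\<Sum>a\<in>UNIV. \<Sum>b\<in>UNIV. ?G a b * weyl g y k a b m) =
     (\<Sum>a\<in>UNIV. \<Sum>b\<in>UNIV. ?G a b * ?R k a b m)
     + wc1 * (g y m k * (\<Sum>a\<in>UNIV. \<Sum>b\<in>UNIV. ?G a b * ?Ric a b) - (\<Sum>a\<in>UNIV. \<Sum>b\<in>UNIV. ?G a b * g y m a * ?Ric k b)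
        + ?Ric m k * (\<Sum>a\<in>UNIV. \<Sum>b\<in>UNIV. ?G a b * g y a b) - (\<Sum>a\<in>UNIV. \<Sum>b\<in>UNIV. ?G a b * ?Ric m a * g y k b))
     - wc2 y * (g y m k * (\<Sum>a\<in>UNIV. \<Sum>b\<in>UNIV. ?G a b * g y a b) - (\<Sum>a\<in>UNIV. \<Sum>b\<in>UNIV. ?G a b * g y m a * g y k b))"
    unfolding pw by (simp add: sum.distrib sum_subtractf sum_distrib_left right_diff_distrib distrib_left)
  also have "\<dots> = - ?Ric k m + wc1 * (g y m k * ?s - ?Ric k m + ?Ric m k * ?n - ?Ric m k)
     - wc2 y * (g y m k * ?n - g y k m)"
    unfolding t1 t2 t3 t4 t5 t6 ..
  also have "\<dots> = 0"
  proof -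
    have n2: "?n - 2 \<noteq> 0" "?n - 1 \<noteq> 0" using n3 by auto
    have e1: "wc1 * (?n - 2) = 1" unfolding wc1_def using n2 by simp
    have q: "(?n - 1) * (?n - 2) \<noteq> 0" using n2 by simp
    have e3: "wc2 y * ((?n - 1) * (?n - 2)) = ?s" unfolding wc2_def using q by simp
    have e2: "wc2 y * (?n - 1) = ?s * wc1"
    proof -
      have "wc2 y * (?n - 1) = wc2 y * (?n - 1) * (wc1 * (?n - 2))" unfolding e1 by simp
      also have "\<dots> = (wc2 y * ((?n - 1) * (?n - 2))) * wc1" by (simp only: ac_simps)
      finally show ?thesis unfolding e3 .
    qed
    have "- ?Ric k m + wc1 * (g y m k * ?s - ?Ric k m + ?Ric m k * ?n - ?Ric m k)
     - wc2 y * (g y m k * ?n - g y k m) = - ?Ric k m + (wc1 * (?n - 2)) * ?Ric k m + wc1 * ?s * g y k m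
      - (wc2 y * (?n - 1)) * g y k m"
      using ricci_sym[OF y, of k m] g_sym[OF y, of k m] by (simp add: algebra_simps)
    thus ?thesis unfolding e1 e2 by simp
  qed
  finally show ?thesis .
qed

end

context chart begin

lemma pd_zero_on: "x \<in> U \<Longrightarrow> (\<And>z. z \<in> U \<Longrightarrow> f z = 0) \<Longrightarrow> pd i f x = 0"
  using pd_cong[OF U_open, of x f "\<lambda>z. 0" i] pd_const by simp

lemma pd_ginv: "x \<in> U \<Longrightarrow> pd k (\<lambda>z. ginv g z a d) x =
   - (\<Sum>b\<in>UNIV. christoffel g x a k b * ginv g x b d) - (\<Sum>c\<in>UNIV. ginv g x a c * christoffel g x d k c)"
proof -
  assume x: "x \<in> U"
  let ?G = "ginv g x" and ?dG = "\<lambda>a c. pd k (\<lambda>z. ginv g z a c) x" and ?\<Gamma> = "christoffel g x"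
  have dG: "\<And>a c. (\<lambda>z. ginv g z a c) differentiable (at x)" by (rule da[OF ginv_smooth x])
  have dgg: "\<And>a c. (\<lambda>z. g z a c) differentiable (at x)" by (rule da[OF g_smooth x])
  have E: "(\<Sum>c\<in>UNIV. ?dG a c * g x c b + ?G a c * dg x k c b) = 0" for b
  proof -
    have "pd k (\<lambda>z. \<Sum>c\<in>UNIV. ginv g z a c * g z c b) x = 0"
      using pd_cong[OF U_open x, of "\<lambda>z. \<Sum>c\<in>UNIV. ginv g z a c * g z c b" "\<lambda>z. if a = b then 1 else 0" k]
      by (simp add: ginv_left pd_const)
    moreover have "pd k (\<lambda>z. \<Sum>c\<in>UNIV. ginv g z a c * g z c b) x = (\<Sum>c\<in>UNIV. ?dG a c * g x c b + ?G a c * dg x k c b)"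
      by (subst pd_sum) (auto intro!: sum.cong pd_mult dG dgg differentiable_mult)
    ultimately show ?thesis by simp
  qed
  have "?dG a d = (\<Sum>c\<in>UNIV. ?dG a c * (if c = d then 1 else 0))" by (simp add: sum.delta')
  also have "\<dots> = (\<Sum>c\<in>UNIV. ?dG a c * (\<Sum>b\<in>UNIV. g x c b * ?G b d))" using ginv_right[OF x] by simp
  also have "\<dots> = (\<Sum>b\<in>UNIV. (\<Sum>c\<in>UNIV. ?dG a c * g x c b) * ?G b d)"
    by (simp add: sum_distrib_left sum_distrib_right mult.assoc) (rule sum.swap)
  also have "\<dots> = (\<Sum>b\<in>UNIV. - (\<Sum>c\<in>UNIV. ?G a c * dg x k c b) * ?G b d)"
  proof -
    have E': "(\<Sum>c\<in>UNIV. ?dG a c * g x c b) = - (\<Sum>c\<in>UNIV. ?G a c * dg x k c b)" for b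
      using E[of b] by (simp add: sum.distrib eq_neg_iff_add_eq_0)
    show ?thesis unfolding E' ..
  qed
  also have "\<dots> = - (\<Sum>b\<in>UNIV. \<Sum>c\<in>UNIV. ?G a c * (Lc x b k c + Lc x c k b) * ?G b d)"
    using dg_L[OF x] by (simp add: sum_distrib_right sum_negf)
  also have "\<dots> = - (\<Sum>b\<in>UNIV. \<Sum>c\<in>UNIV. ?G a c * Lc x b k c * ?G b d)
                 - (\<Sum>b\<in>UNIV. \<Sum>c\<in>UNIV. ?G a c * Lc x c k b * ?G b d)"
    by (simp add: algebra_simps sum.distrib)
  also have "(\<Sum>b\<in>UNIV. \<Sum>c\<in>UNIV. ?G a c * Lc x c k b * ?G b d) = (\<Sum>b\<in>UNIV. ?\<Gamma> a k b * ?G b d)"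
    by (simp add: chr_L sum_distrib_right)
  also have "(\<Sum>b\<in>UNIV. \<Sum>c\<in>UNIV. ?G a c * Lc x b k c * ?G b d) = (\<Sum>c\<in>UNIV. ?G a c * ?\<Gamma> d k c)"
  proof -
    have "(\<Sum>b\<in>UNIV. \<Sum>c\<in>UNIV. ?G a c * Lc x b k c * ?G b d) = (\<Sum>c\<in>UNIV. \<Sum>b\<in>UNIV. ?G a c * Lc x b k c * ?G b d)"
      by (rule sum.swap)
    also have "\<dots> = (\<Sum>c\<in>UNIV. ?G a c * ?\<Gamma> d k c)"
      unfolding chr_L using ginv_sym[OF x, of d] by (simp add: sum_distrib_left algebra_simps)
    finally show ?thesis .
  qed
  finally show ?thesis by simp
qed

lemma gcontract:
  assumes x: "x \<in> U"
    and dX: "\<And>u v. (\<lambda>z. X z u v) differentiable (at x)"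
    and pX: "\<And>u v. pd i (\<lambda>z. X z u v) x = KX u v + (\<Sum>e\<in>UNIV. christoffel g x e i u * X x e v)
                     + (\<Sum>e\<in>UNIV. christoffel g x e i v * X x u e) + PX u v"
  shows "pd i (\<lambda>z. \<Sum>u\<in>UNIV. \<Sum>v\<in>UNIV. ginv g z u v * X z u v) x
       = (\<Sum>u\<in>UNIV. \<Sum>v\<in>UNIV. ginv g x u v * KX u v) + (\<Sum>u\<in>UNIV. \<Sum>v\<in>UNIV. ginv g x u v * PX u v)"
proof -
  let ?G = "ginv g x" and ?\<Gamma> = "christoffel g x"
  have dG: "\<And>a c. (\<lambda>z. ginv g z a c) differentiable (at x)" by (rule da[OF ginv_smooth x])
  have "pd i (\<lambda>z. \<Sum>u\<in>UNIV. \<Sum>v\<in>UNIV. ginv g z u v * X z u v) x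
      = (\<Sum>u\<in>UNIV. \<Sum>v\<in>UNIV. pd i (\<lambda>z. ginv g z u v) x * X x u v + ?G u v * pd i (\<lambda>z. X z u v) x)"
    by (subst pd_sum, auto intro!: differentiable_sum differentiable_mult dG dX sum.cong, subst pd_sum)
       (auto intro!: differentiable_sum differentiable_mult dG dX sum.cong pd_mult)
  also have "\<dots> = (\<Sum>u\<in>UNIV. \<Sum>v\<in>UNIV. ?G u v * KX u v) + (\<Sum>u\<in>UNIV. \<Sum>v\<in>UNIV. ?G u v * PX u v)
     + ((\<Sum>u\<in>UNIV. \<Sum>v\<in>UNIV. ?G u v * (\<Sum>e\<in>UNIV. ?\<Gamma> e i u * X x e v))
        - (\<Sum>u\<in>UNIV. \<Sum>v\<in>UNIV. (\<Sum>b\<in>UNIV. ?\<Gamma> u i b * ?G b v) * X x u v))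
     + ((\<Sum>u\<in>UNIV. \<Sum>v\<in>UNIV. ?G u v * (\<Sum>e\<in>UNIV. ?\<Gamma> e i v * X x u e))
        - (\<Sum>u\<in>UNIV. \<Sum>v\<in>UNIV. (\<Sum>c\<in>UNIV. ?G u c * ?\<Gamma> v i c) * X x u v))"
    unfolding pd_ginv[OF x] pX by (simp add: sum.distrib sum_subtractf algebra_simps)
  also have "(\<Sum>u\<in>UNIV. \<Sum>v\<in>UNIV. ?G u v * (\<Sum>e\<in>UNIV. ?\<Gamma> e i u * X x e v))
        = (\<Sum>u\<in>UNIV. \<Sum>v\<in>UNIV. (\<Sum>b\<in>UNIV. ?\<Gamma> u i b * ?G b v) * X x u v)"
  proof -
    have "(\<Sum>u\<in>UNIV. \<Sum>v\<in>UNIV. ?G u v * (\<Sum>e\<in>UNIV. ?\<Gamma> e i u * X x e v))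
        = (\<Sum>u\<in>UNIV. \<Sum>v\<in>UNIV. \<Sum>e\<in>UNIV. ?G u v * ?\<Gamma> e i u * X x e v)"
      by (simp add: sum_distrib_left mult.assoc)
    also have "\<dots> = (\<Sum>u\<in>UNIV. \<Sum>e\<in>UNIV. \<Sum>v\<in>UNIV. ?G u v * ?\<Gamma> e i u * X x e v)"
      by (rule sum.cong[OF refl], rule sum.swap)
    also have "\<dots> = (\<Sum>e\<in>UNIV. \<Sum>u\<in>UNIV. \<Sum>v\<in>UNIV. ?G u v * ?\<Gamma> e i u * X x e v)"
      by (rule sum.swap)
    also have "\<dots> = (\<Sum>e\<in>UNIV. \<Sum>v\<in>UNIV. \<Sum>u\<in>UNIV. ?G u v * ?\<Gamma> e i u * X x e v)"
      by (rule sum.cong[OF refl], rule sum.swap)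
    also have "\<dots> = (\<Sum>u\<in>UNIV. \<Sum>v\<in>UNIV. (\<Sum>b\<in>UNIV. ?\<Gamma> u i b * ?G b v) * X x u v)"
      by (simp add: sum_distrib_right sum_distrib_left algebra_simps)
    finally show ?thesis .
  qed
  also have "(\<Sum>u\<in>UNIV. \<Sum>v\<in>UNIV. ?G u v * (\<Sum>e\<in>UNIV. ?\<Gamma> e i v * X x u e))
        = (\<Sum>u\<in>UNIV. \<Sum>v\<in>UNIV. (\<Sum>c\<in>UNIV. ?G u c * ?\<Gamma> v i c) * X x u v)"
  proof -
    have "(\<Sum>u\<in>UNIV. \<Sum>v\<in>UNIV. ?G u v * (\<Sum>e\<in>UNIV. ?\<Gamma> e i v * X x u e))
        = (\<Sum>u\<in>UNIV. \<Sum>v\<in>UNIV. \<Sum>e\<in>UNIV. ?G u v * ?\<Gamma> e i v * X x u e)"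
      by (simp add: sum_distrib_left mult.assoc)
    also have "\<dots> = (\<Sum>u\<in>UNIV. \<Sum>e\<in>UNIV. \<Sum>v\<in>UNIV. ?G u v * ?\<Gamma> e i v * X x u e)"
      by (rule sum.cong[OF refl], rule sum.swap)
    also have "\<dots> = (\<Sum>u\<in>UNIV. \<Sum>v\<in>UNIV. (\<Sum>c\<in>UNIV. ?G u c * ?\<Gamma> v i c) * X x u v)"
      by (simp add: sum_distrib_right sum_distrib_left algebra_simps)
    finally show ?thesis .
  qed
  finally show ?thesis by simp
qed

lemma gtrans: "(\<Sum>u\<in>UNIV. \<Sum>v\<in>UNIV. G u v * (\<Sum>e\<in>UNIV. \<gamma> e * Y e u v))
   = (\<Sum>e\<in>UNIV. \<gamma> e * (\<Sum>u\<in>UNIV. \<Sum>v\<in>UNIV. G u v * Y e u v))" for G :: "'n \<Rightarrow> 'n \<Rightarrow> real"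
proof -
  have "(\<Sum>u\<in>UNIV. \<Sum>v\<in>UNIV. G u v * (\<Sum>e\<in>UNIV. \<gamma> e * Y e u v))
      = (\<Sum>u\<in>UNIV. \<Sum>v\<in>UNIV. \<Sum>e\<in>UNIV. \<gamma> e * (G u v * Y e u v))"
    by (simp add: sum_distrib_left algebra_simps)
  also have "\<dots> = (\<Sum>u\<in>UNIV. \<Sum>e\<in>UNIV. \<Sum>v\<in>UNIV. \<gamma> e * (G u v * Y e u v))"
    by (rule sum.cong[OF refl], rule sum.swap)
  also have "\<dots> = (\<Sum>e\<in>UNIV. \<Sum>u\<in>UNIV. \<Sum>v\<in>UNIV. \<gamma> e * (G u v * Y e u v))"
    by (rule sum.swap)
  also have "\<dots> = (\<Sum>e\<in>UNIV. \<gamma> e * (\<Sum>u\<in>UNIV. \<Sum>v\<in>UNIV. G u v * Y e u v))"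
    by (simp add: sum_distrib_left)
  finally show ?thesis .
qed

end

lemma gA1: "(\<forall>u v. G u v = G v u) \<Longrightarrow> (\<Sum>u\<in>UNIV. \<Sum>v\<in>UNIV. G u v * (a u * Y v)) = (\<Sum>v\<in>UNIV. (\<Sum>u\<in>UNIV. G v u * a u) * Y v)"
  for G :: "'n::finite \<Rightarrow> 'n \<Rightarrow> real"
proof -
  assume s: "\<forall>u v. G u v = G v u"
  have "(\<Sum>u\<in>UNIV. \<Sum>v\<in>UNIV. G u v * (a u * Y v)) = (\<Sum>v\<in>UNIV. \<Sum>u\<in>UNIV. G u v * (a u * Y v))" by (rule sum.swap)
  also have "\<dots> = (\<Sum>v\<in>UNIV. (\<Sum>u\<in>UNIV. G v u * a u) * Y v)" using s by (simp add: sum_distrib_right mult.assoc)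
  finally show ?thesis .
qed

lemma gA2: "(\<Sum>u\<in>UNIV. \<Sum>v\<in>UNIV. G u v * (a v * Y u)) = (\<Sum>u\<in>UNIV. (\<Sum>v\<in>UNIV. G u v * a v) * Y u)"
  for G :: "'n::finite \<Rightarrow> 'n \<Rightarrow> real"
  by (simp add: sum_distrib_right mult.assoc)

locale cqr = chart U g for U :: "(real^'n::finite) set" and g +
  fixes A :: "real^'n \<Rightarrow> 'n \<Rightarrow> real"
  assumes n3: "CARD('n) \<ge> 3"
    and cqr_eq: "\<And>x i j k l m. x \<in> U \<Longrightarrow> cov4 g (weyl g) x i j k l m =
        2 * A x i * weyl g x j k l m + A x j * weyl g x i k l m + A x k * weyl g x j i l m
        + A x l * weyl g x j k i m + A x m * weyl g x j k l i"
begin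

definition "Aup x c = (\<Sum>q\<in>UNIV. ginv g x c q * A x q)"

lemma pd_weyl: "x \<in> U \<Longrightarrow> pd i (\<lambda>z. weyl g z j k l m) x = cov4 g (weyl g) x i j k l m
   + (\<Sum>e\<in>UNIV. christoffel g x e i j * weyl g x e k l m) + (\<Sum>e\<in>UNIV. christoffel g x e i k * weyl g x j e l m)
   + (\<Sum>e\<in>UNIV. christoffel g x e i l * weyl g x j k e m) + (\<Sum>e\<in>UNIV. christoffel g x e i m * weyl g x j k l e)"
  unfolding cov4_def by (simp add: sum.distrib)

lemma divergence: "x \<in> U \<Longrightarrow> (\<Sum>u\<in>UNIV. \<Sum>v\<in>UNIV. ginv g x u v * cov4 g (weyl g) x j k u v m) = 0"
proof -
  assume x: "x \<in> U"
  let ?\<Gamma> = "christoffel g x" and ?C = "weyl g x" and ?G = "ginv g x"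
  have "pd j (\<lambda>z. \<Sum>u\<in>UNIV. \<Sum>v\<in>UNIV. ginv g z u v * weyl g z k u v m) x = 0"
    by (rule pd_zero_on[OF x]) (rule W_trace[OF n3])
  moreover have "pd j (\<lambda>z. \<Sum>u\<in>UNIV. \<Sum>v\<in>UNIV. ginv g z u v * weyl g z k u v m) x
     = (\<Sum>u\<in>UNIV. \<Sum>v\<in>UNIV. ?G u v * cov4 g (weyl g) x j k u v m)
     + (\<Sum>u\<in>UNIV. \<Sum>v\<in>UNIV. ?G u v * ((\<Sum>e\<in>UNIV. ?\<Gamma> e j k * ?C e u v m) + (\<Sum>e\<in>UNIV. ?\<Gamma> e j m * ?C k u v e)))"
    by (rule gcontract[OF x]) (auto intro: da[OF weyl_smooth x] simp: pd_weyl[OF x])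
  moreover have "(\<Sum>u\<in>UNIV. \<Sum>v\<in>UNIV. ?G u v * ((\<Sum>e\<in>UNIV. ?\<Gamma> e j k * ?C e u v m) + (\<Sum>e\<in>UNIV. ?\<Gamma> e j m * ?C k u v e))) = 0"
    by (simp add: distrib_left sum.distrib gtrans W_trace[OF n3 x])
  ultimately show ?thesis by simp
qed

lemma E0: "x \<in> U \<Longrightarrow> (\<Sum>c\<in>UNIV. Aup x c * weyl g x k j c m) + (\<Sum>c\<in>UNIV. Aup x c * weyl g x k c j m) = 0"
proof -
  assume x: "x \<in> U"
  let ?C = "weyl g x" and ?G = "ginv g x"
  have gs: "\<forall>u v. ?G u v = ?G v u" using ginv_sym[OF x] by blast
  have "0 = (\<Sum>u\<in>UNIV. \<Sum>v\<in>UNIV. ?G u v * cov4 g (weyl g) x j k u v m)" using divergence[OF x] by simp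
  also have "\<dots> = (\<Sum>u\<in>UNIV. \<Sum>v\<in>UNIV. ?G u v * (2 * A x j * ?C k u v m + A x k * ?C j u v m + A x m * ?C k u v j))
     + (\<Sum>u\<in>UNIV. \<Sum>v\<in>UNIV. ?G u v * (A x u * ?C k j v m))
     + (\<Sum>u\<in>UNIV. \<Sum>v\<in>UNIV. ?G u v * (A x v * ?C k u j m))"
    unfolding cqr_eq[OF x] by (simp add: sum.distrib algebra_simps)
  also have "(\<Sum>u\<in>UNIV. \<Sum>v\<in>UNIV. ?G u v * (2 * A x j * ?C k u v m + A x k * ?C j u v m + A x m * ?C k u v j)) = 0"
    using W_trace[OF n3 x] by (simp add: sum.distrib algebra_simps sum_distrib_left[symmetric])
  also have "(\<Sum>u\<in>UNIV. \<Sum>v\<in>UNIV. ?G u v * (A x u * ?C k j v m)) = (\<Sum>c\<in>UNIV. Aup x c * ?C k j c m)"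
    unfolding gA1[OF gs] Aup_def ..
  also have "(\<Sum>u\<in>UNIV. \<Sum>v\<in>UNIV. ?G u v * (A x v * ?C k u j m)) = (\<Sum>c\<in>UNIV. Aup x c * ?C k c j m)"
    unfolding gA2 Aup_def ..
  finally show ?thesis by simp
qed

lemma Z_zero: "x \<in> U \<Longrightarrow> (\<Sum>c\<in>UNIV. Aup x c * weyl g x c k l m) = 0"
proof -
  assume x: "x \<in> U"
  define Z where "Z k l m = (\<Sum>c\<in>UNIV. Aup x c * weyl g x c k l m)" for k l m
  have I: "Z m k j + Z k m j = 0" for k j m
  proof -
    have "(\<Sum>c\<in>UNIV. Aup x c * weyl g x k j c m) = Z m k j"
      unfolding Z_def using W_pair[OF x, of k j _ m] by simp
    moreover have "(\<Sum>c\<in>UNIV. Aup x c * weyl g x k c j m) = Z k m j"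
      unfolding Z_def using W_anti_jk[OF x, of k _ j m] W_anti_lm[OF x, of _ k j m] by simp
    ultimately show ?thesis using E0[OF x, of k j m] by simp
  qed
  have II: "Z k l m = - Z k m l" for k l m
    unfolding Z_def using W_anti_lm[OF x, of _ k l m] by (simp add: sum_negf[symmetric])
  have III: "Z k l m + Z l m k + Z m k l = 0" for k l m
    unfolding Z_def using W_bianchi[OF x] by (simp add: sum.distrib[symmetric] distrib_left[symmetric])
  have as: "Z a b c = - Z b a c" for a b c using I[of a b c] by simp
  have "Z l m k = Z k l m" using II[of l m k] as[of l k m] by simp
  moreover have "Z m k l = Z k l m" using as[of m k l] II[of k m l] by simp
  ultimately have "3 * Z k l m = 0" using III[of k l m] by simp
  thus ?thesis unfolding Z_def by simp
qed

lemma Z2: "x \<in> U \<Longrightarrow> (\<Sum>c\<in>UNIV. Aup x c * weyl g x k c l m) = 0"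
  using Z_zero[of x k l m] W_anti_jk[of x k _ l m] by (simp add: sum_negf)

lemma Z3: "x \<in> U \<Longrightarrow> (\<Sum>c\<in>UNIV. Aup x c * weyl g x k l c m) = 0"
  using Z_zero[of x m k l] W_pair[of x k l _ m] by simp

lemma Z4: "x \<in> U \<Longrightarrow> (\<Sum>c\<in>UNIV. Aup x c * weyl g x k l m c) = 0"
  using Z3[of x k l m] W_anti_lm[of x k l m] by (simp add: sum_negf)

end

lemma reorder6: "(\<Sum>q\<in>UNIV. \<Sum>l\<in>UNIV. \<Sum>m\<in>UNIV. \<Sum>a\<in>UNIV. \<Sum>b\<in>UNIV. \<Sum>c\<in>UNIV. F q l m a b c)
  = (\<Sum>q\<in>UNIV. \<Sum>a\<in>UNIV. \<Sum>l\<in>UNIV. \<Sum>b\<in>UNIV. \<Sum>m\<in>UNIV. \<Sum>c\<in>UNIV. F q l m a b c)"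
  for F :: "'n::finite \<Rightarrow> 'n \<Rightarrow> 'n \<Rightarrow> 'n \<Rightarrow> 'n \<Rightarrow> 'n \<Rightarrow> real"
proof -
  have "(\<Sum>q\<in>UNIV. \<Sum>l\<in>UNIV. \<Sum>m\<in>UNIV. \<Sum>a\<in>UNIV. \<Sum>b\<in>UNIV. \<Sum>c\<in>UNIV. F q l m a b c)
      = (\<Sum>q\<in>UNIV. \<Sum>l\<in>UNIV. \<Sum>a\<in>UNIV. \<Sum>m\<in>UNIV. \<Sum>b\<in>UNIV. \<Sum>c\<in>UNIV. F q l m a b c)"
    by (rule sum.cong[OF refl], rule sum.cong[OF refl], rule sum.swap)
  also have "\<dots> = (\<Sum>q\<in>UNIV. \<Sum>a\<in>UNIV. \<Sum>l\<in>UNIV. \<Sum>m\<in>UNIV. \<Sum>b\<in>UNIV. \<Sum>c\<in>UNIV. F q l m a b c)"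
    by (rule sum.cong[OF refl], rule sum.swap)
  also have "\<dots> = (\<Sum>q\<in>UNIV. \<Sum>a\<in>UNIV. \<Sum>l\<in>UNIV. \<Sum>b\<in>UNIV. \<Sum>m\<in>UNIV. \<Sum>c\<in>UNIV. F q l m a b c)"
    by (rule sum.cong[OF refl], rule sum.cong[OF refl], rule sum.cong[OF refl], rule sum.swap)
  finally show ?thesis .
qed

lemma gswap: "(\<forall>u v. G u v = G v u) \<Longrightarrow> (\<Sum>u\<in>UNIV. \<Sum>v\<in>UNIV. G u v * F u v) = (\<Sum>u\<in>UNIV. \<Sum>v\<in>UNIV. G u v * F v u)"
  for G :: "'n::finite \<Rightarrow> 'n \<Rightarrow> real"
proof -
  assume s: "\<forall>u v. G u v = G v u"
  have "(\<Sum>u\<in>UNIV. \<Sum>v\<in>UNIV. G u v * F u v) = (\<Sum>v\<in>UNIV. \<Sum>u\<in>UNIV. G u v * F u v)" by (rule sum.swap)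
  also have "\<dots> = (\<Sum>u\<in>UNIV. \<Sum>v\<in>UNIV. G u v * F v u)" using s by simp
  finally show ?thesis .
qed

lemma push: "(\<Sum>s\<in>UNIV. w s * (\<Sum>u\<in>UNIV. \<Sum>v\<in>UNIV. G u v * F s u v))
   = (\<Sum>u\<in>UNIV. \<Sum>v\<in>UNIV. G u v * (\<Sum>s\<in>UNIV. w s * F s u v))"
  for G :: "'n::finite \<Rightarrow> 'n \<Rightarrow> real" and w :: "'m::finite \<Rightarrow> real"
proof -
  have "(\<Sum>s\<in>UNIV. w s * (\<Sum>u\<in>UNIV. \<Sum>v\<in>UNIV. G u v * F s u v))
      = (\<Sum>s\<in>UNIV. \<Sum>u\<in>UNIV. \<Sum>v\<in>UNIV. G u v * (w s * F s u v))"
    by (simp add: sum_distrib_left algebra_simps)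
  also have "\<dots> = (\<Sum>u\<in>UNIV. \<Sum>s\<in>UNIV. \<Sum>v\<in>UNIV. G u v * (w s * F s u v))" by (rule sum.swap)
  also have "\<dots> = (\<Sum>u\<in>UNIV. \<Sum>v\<in>UNIV. \<Sum>s\<in>UNIV. G u v * (w s * F s u v))"
    by (rule sum.cong[OF refl], rule sum.swap)
  also have "\<dots> = (\<Sum>u\<in>UNIV. \<Sum>v\<in>UNIV. G u v * (\<Sum>s\<in>UNIV. w s * F s u v))"
    by (simp add: sum_distrib_left)
  finally show ?thesis .
qed

lemma gconst: "(\<Sum>u\<in>UNIV. \<Sum>v\<in>UNIV. G u v * (c * Y u v)) = c * (\<Sum>u\<in>UNIV. \<Sum>v\<in>UNIV. G u v * Y u v)"
  for G :: "'n::finite \<Rightarrow> 'n \<Rightarrow> real"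
  by (simp add: sum_distrib_left algebra_simps)

context chart begin

definition "NN z p q l r a b = (\<Sum>m\<in>UNIV. \<Sum>c\<in>UNIV. ginv g z m c * (weyl g z p q l m * weyl g z r a b c))"
definition "MM z p q r a = (\<Sum>l\<in>UNIV. \<Sum>b\<in>UNIV. ginv g z l b * NN z p q l r a b)"
definition "W2 z p r = (\<Sum>q\<in>UNIV. \<Sum>a\<in>UNIV. ginv g z q a * MM z p q r a)"

lemma weyl_sq_W2: "weyl_sq g z p r = W2 z p r"
  unfolding weyl_sq_def W2_def MM_def NN_def
  by (subst reorder6) (simp add: sum_distrib_left algebra_simps)

lemma NN_smooth: "smooth_on U (\<lambda>z. NN z p q l r a b)"
  unfolding NN_def by (intro smI weyl_smooth)
lemma MM_smooth: "smooth_on U (\<lambda>z. MM z p q r a)"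
  unfolding MM_def by (intro smI NN_smooth)
lemma W2_smooth: "smooth_on U (\<lambda>z. W2 z p r)"
  unfolding W2_def by (intro smI MM_smooth)

lemma NN_sym: "z \<in> U \<Longrightarrow> NN z p q l r a b = NN z r a b p q l"
  unfolding NN_def using ginv_sym[of z] by (subst gswap) (auto simp: mult.commute)
lemma MM_sym: "z \<in> U \<Longrightarrow> MM z p q r a = MM z r a p q"
  unfolding MM_def using ginv_sym[of z] NN_sym[of z] by (subst gswap) auto
lemma W2_sym: "z \<in> U \<Longrightarrow> W2 z p r = W2 z r p"
  unfolding W2_def using ginv_sym[of z] MM_sym[of z] by (subst gswap) auto

end

lemma sum_pull_r: "(\<Sum>s\<in>UNIV. w s * (Y s * c)) = (\<Sum>s\<in>UNIV. w s * Y s) * (c::real)"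
  by (simp add: sum_distrib_right mult.assoc)
lemma sum_pull_l: "(\<Sum>s\<in>UNIV. w s * (c * Y s)) = (c::real) * (\<Sum>s\<in>UNIV. w s * Y s)"
  by (simp add: sum_distrib_left algebra_simps)

context cqr begin

lemmas zs = Z_zero Z2 Z3 Z4

lemma NN_z1: "x \<in> U \<Longrightarrow> (\<Sum>s\<in>UNIV. Aup x s * NN x s q l r a b) = 0"
  unfolding NN_def by (subst push) (simp add: sum_pull_r zs)
lemma NN_z2: "x \<in> U \<Longrightarrow> (\<Sum>s\<in>UNIV. Aup x s * NN x p s l r a b) = 0"
  unfolding NN_def by (subst push) (simp add: sum_pull_r zs)
lemma NN_z3: "x \<in> U \<Longrightarrow> (\<Sum>s\<in>UNIV. Aup x s * NN x p q s r a b) = 0"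
  unfolding NN_def by (subst push) (simp add: sum_pull_r zs)
lemma NN_z4: "x \<in> U \<Longrightarrow> (\<Sum>s\<in>UNIV. Aup x s * NN x p q l s a b) = 0"
  unfolding NN_def by (subst push) (simp add: sum_pull_l zs)
lemma NN_z5: "x \<in> U \<Longrightarrow> (\<Sum>s\<in>UNIV. Aup x s * NN x p q l r s b) = 0"
  unfolding NN_def by (subst push) (simp add: sum_pull_l zs)
lemma NN_z6: "x \<in> U \<Longrightarrow> (\<Sum>s\<in>UNIV. Aup x s * NN x p q l r a s) = 0"
  unfolding NN_def by (subst push) (simp add: sum_pull_l zs)

lemma MM_z1: "x \<in> U \<Longrightarrow> (\<Sum>s\<in>UNIV. Aup x s * MM x s q r a) = 0"
  unfolding MM_def by (subst push) (simp add: NN_z1)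
lemma MM_z2: "x \<in> U \<Longrightarrow> (\<Sum>s\<in>UNIV. Aup x s * MM x p s r a) = 0"
  unfolding MM_def by (subst push) (simp add: NN_z2)
lemma MM_z3: "x \<in> U \<Longrightarrow> (\<Sum>s\<in>UNIV. Aup x s * MM x p q s a) = 0"
  unfolding MM_def by (subst push) (simp add: NN_z4)
lemma MM_z4: "x \<in> U \<Longrightarrow> (\<Sum>s\<in>UNIV. Aup x s * MM x p q r s) = 0"
  unfolding MM_def by (subst push) (simp add: NN_z5)

lemma W2_z1: "x \<in> U \<Longrightarrow> (\<Sum>s\<in>UNIV. Aup x s * W2 x s r) = 0"
  unfolding W2_def by (subst push) (simp add: MM_z1)
lemma W2_z2: "x \<in> U \<Longrightarrow> (\<Sum>s\<in>UNIV. Aup x s * W2 x p s) = 0"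
  unfolding W2_def by (subst push) (simp add: MM_z3)

end

context cqr begin

lemma pd_NN: assumes x: "x \<in> U" shows "pd i (\<lambda>z. NN z p q l r a b) x =
   4 * A x i * NN x p q l r a b + A x p * NN x i q l r a b + A x q * NN x p i l r a b + A x l * NN x p q i r a b
   + A x r * NN x p q l i a b + A x a * NN x p q l r i b + A x b * NN x p q l r a i
   + (\<Sum>e\<in>UNIV. christoffel g x e i p * NN x e q l r a b) + (\<Sum>e\<in>UNIV. christoffel g x e i q * NN x p e l r a b)
   + (\<Sum>e\<in>UNIV. christoffel g x e i l * NN x p q e r a b) + (\<Sum>e\<in>UNIV. christoffel g x e i r * NN x p q l e a b)
   + (\<Sum>e\<in>UNIV. christoffel g x e i a * NN x p q l r e b) + (\<Sum>e\<in>UNIV. christoffel g x e i b * NN x p q l r a e)"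
proof -
  let ?C = "weyl g x" and ?\<Gamma> = "christoffel g x" and ?G = "ginv g x"
  have gs: "\<forall>u v. ?G u v = ?G v u" using ginv_sym[OF x] by blast
  define KX where "KX m c = cov4 g (weyl g) x i p q l m * ?C r a b c + ?C p q l m * cov4 g (weyl g) x i r a b c" for m c
  define PX where "PX m c = (\<Sum>e\<in>UNIV. ?\<Gamma> e i p * (?C e q l m * ?C r a b c)) + (\<Sum>e\<in>UNIV. ?\<Gamma> e i q * (?C p e l m * ?C r a b c))
     + (\<Sum>e\<in>UNIV. ?\<Gamma> e i l * (?C p q e m * ?C r a b c)) + (\<Sum>e\<in>UNIV. ?\<Gamma> e i r * (?C p q l m * ?C e a b c))
     + (\<Sum>e\<in>UNIV. ?\<Gamma> e i a * (?C p q l m * ?C r e b c)) + (\<Sum>e\<in>UNIV. ?\<Gamma> e i b * (?C p q l m * ?C r a e c))" for m c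
  have dW: "\<And>j k l m. (\<lambda>z. weyl g z j k l m) differentiable (at x)" by (rule da[OF weyl_smooth x])
  have step1: "pd i (\<lambda>z. NN z p q l r a b) x = (\<Sum>m\<in>UNIV. \<Sum>c\<in>UNIV. ?G m c * KX m c) + (\<Sum>m\<in>UNIV. \<Sum>c\<in>UNIV. ?G m c * PX m c)"
    unfolding NN_def
  proof (rule gcontract[OF x])
    fix m c
    show "(\<lambda>z. weyl g z p q l m * weyl g z r a b c) differentiable (at x)" by (intro differentiable_mult dW)
    show "pd i (\<lambda>z. weyl g z p q l m * weyl g z r a b c) x = KX m c + (\<Sum>e\<in>UNIV. ?\<Gamma> e i m * (?C p q l e * ?C r a b c))
       + (\<Sum>e\<in>UNIV. ?\<Gamma> e i c * (?C p q l m * ?C r a b e)) + PX m c"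
      unfolding pd_mult[OF dW dW] pd_weyl[OF x] KX_def PX_def
      by (simp add: sum_distrib_left sum_distrib_right algebra_simps)
  qed
  have step2: "(\<Sum>m\<in>UNIV. \<Sum>c\<in>UNIV. ?G m c * PX m c) =
     (\<Sum>e\<in>UNIV. ?\<Gamma> e i p * NN x e q l r a b) + (\<Sum>e\<in>UNIV. ?\<Gamma> e i q * NN x p e l r a b)
   + (\<Sum>e\<in>UNIV. ?\<Gamma> e i l * NN x p q e r a b) + (\<Sum>e\<in>UNIV. ?\<Gamma> e i r * NN x p q l e a b)
   + (\<Sum>e\<in>UNIV. ?\<Gamma> e i a * NN x p q l r e b) + (\<Sum>e\<in>UNIV. ?\<Gamma> e i b * NN x p q l r a e)"
    unfolding PX_def distrib_left sum.distrib gtrans NN_def ..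
  have K1: "KX m c = 4 * A x i * (?C p q l m * ?C r a b c) + A x p * (?C i q l m * ?C r a b c)
     + A x q * (?C p i l m * ?C r a b c) + A x l * (?C p q i m * ?C r a b c) + A x r * (?C p q l m * ?C i a b c)
     + A x a * (?C p q l m * ?C r i b c) + A x b * (?C p q l m * ?C r a i c)
     + A x m * (?C p q l i * ?C r a b c) + A x c * (?C p q l m * ?C r a b i)" for m c
    unfolding KX_def cqr_eq[OF x] by (simp add: algebra_simps)
  have z1: "(\<Sum>m\<in>UNIV. \<Sum>c\<in>UNIV. ?G m c * (A x m * (?C p q l i * ?C r a b c))) = 0"
    unfolding gA1[OF gs] Aup_def[symmetric] using zs[OF x] by (simp add: sum_pull_l mult.commute)
  have z2: "(\<Sum>m\<in>UNIV. \<Sum>c\<in>UNIV. ?G m c * (A x c * (?C p q l m * ?C r a b i))) = 0"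
    unfolding gA2 Aup_def[symmetric] using zs[OF x] by (simp add: sum_pull_r mult.commute)
  have step3: "(\<Sum>m\<in>UNIV. \<Sum>c\<in>UNIV. ?G m c * KX m c) =
   4 * A x i * NN x p q l r a b + A x p * NN x i q l r a b + A x q * NN x p i l r a b + A x l * NN x p q i r a b
   + A x r * NN x p q l i a b + A x a * NN x p q l r i b + A x b * NN x p q l r a i"
    unfolding K1 distrib_left sum.distrib gconst z1 z2 NN_def by simp
  show ?thesis unfolding step1 step2 step3 by simp
qed

end

context cqr begin

lemma pd_MM: assumes x: "x \<in> U" shows "pd i (\<lambda>z. MM z p q r a) x =
   4 * A x i * MM x p q r a + A x p * MM x i q r a + A x q * MM x p i r a
   + A x r * MM x p q i a + A x a * MM x p q r i
   + (\<Sum>e\<in>UNIV. christoffel g x e i p * MM x e q r a) + (\<Sum>e\<in>UNIV. christoffel g x e i q * MM x p e r a)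
   + (\<Sum>e\<in>UNIV. christoffel g x e i r * MM x p q e a) + (\<Sum>e\<in>UNIV. christoffel g x e i a * MM x p q r e)"
proof -
  let ?\<Gamma> = "christoffel g x" and ?G = "ginv g x" and ?N = "NN x"
  have gs: "\<forall>u v. ?G u v = ?G v u" using ginv_sym[OF x] by blast
  define KX where "KX l b = 4 * A x i * ?N p q l r a b + A x p * ?N i q l r a b + A x q * ?N p i l r a b + A x l * ?N p q i r a b
   + A x r * ?N p q l i a b + A x a * ?N p q l r i b + A x b * ?N p q l r a i" for l b
  define PX where "PX l b = (\<Sum>e\<in>UNIV. ?\<Gamma> e i p * ?N e q l r a b) + (\<Sum>e\<in>UNIV. ?\<Gamma> e i q * ?N p e l r a b)
     + (\<Sum>e\<in>UNIV. ?\<Gamma> e i r * ?N p q l e a b) + (\<Sum>e\<in>UNIV. ?\<Gamma> e i a * ?N p q l r e b)" for l b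
  have step1: "pd i (\<lambda>z. MM z p q r a) x = (\<Sum>l\<in>UNIV. \<Sum>b\<in>UNIV. ?G l b * KX l b) + (\<Sum>l\<in>UNIV. \<Sum>b\<in>UNIV. ?G l b * PX l b)"
    unfolding MM_def
  proof (rule gcontract[OF x])
    fix l b
    show "(\<lambda>z. NN z p q l r a b) differentiable (at x)" by (rule da[OF NN_smooth x])
    show "pd i (\<lambda>z. NN z p q l r a b) x = KX l b + (\<Sum>e\<in>UNIV. ?\<Gamma> e i l * ?N p q e r a b)
       + (\<Sum>e\<in>UNIV. ?\<Gamma> e i b * ?N p q l r a e) + PX l b"
      unfolding pd_NN[OF x] KX_def PX_def by (simp add: algebra_simps)
  qed
  have step2: "(\<Sum>l\<in>UNIV. \<Sum>b\<in>UNIV. ?G l b * PX l b) =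
     (\<Sum>e\<in>UNIV. ?\<Gamma> e i p * MM x e q r a) + (\<Sum>e\<in>UNIV. ?\<Gamma> e i q * MM x p e r a)
   + (\<Sum>e\<in>UNIV. ?\<Gamma> e i r * MM x p q e a) + (\<Sum>e\<in>UNIV. ?\<Gamma> e i a * MM x p q r e)"
    unfolding PX_def distrib_left sum.distrib gtrans MM_def ..
  have z1: "(\<Sum>l\<in>UNIV. \<Sum>b\<in>UNIV. ?G l b * (A x l * ?N p q i r a b)) = 0"
    unfolding gA1[OF gs] Aup_def[symmetric] using NN_z6[OF x] by (simp add: mult.commute)
  have z2: "(\<Sum>l\<in>UNIV. \<Sum>b\<in>UNIV. ?G l b * (A x b * ?N p q l r a i)) = 0"
    unfolding gA2 Aup_def[symmetric] using NN_z3[OF x] by (simp add: mult.commute)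
  have step3: "(\<Sum>l\<in>UNIV. \<Sum>b\<in>UNIV. ?G l b * KX l b) =
   4 * A x i * MM x p q r a + A x p * MM x i q r a + A x q * MM x p i r a
   + A x r * MM x p q i a + A x a * MM x p q r i"
    unfolding KX_def distrib_left sum.distrib gconst z1 z2 MM_def mult.assoc by simp
  show ?thesis unfolding step1 step2 step3 by simp
qed

lemma pd_W2: assumes x: "x \<in> U" shows "pd i (\<lambda>z. W2 z p r) x =
   4 * A x i * W2 x p r + A x p * W2 x i r + A x r * W2 x p i
   + (\<Sum>e\<in>UNIV. christoffel g x e i p * W2 x e r) + (\<Sum>e\<in>UNIV. christoffel g x e i r * W2 x p e)"
proof -
  let ?\<Gamma> = "christoffel g x" and ?G = "ginv g x" and ?M = "MM x"
  have gs: "\<forall>u v. ?G u v = ?G v u" using ginv_sym[OF x] by blast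
  define KX where "KX q a = 4 * A x i * ?M p q r a + A x p * ?M i q r a + A x q * ?M p i r a
   + A x r * ?M p q i a + A x a * ?M p q r i" for q a
  define PX where "PX q a = (\<Sum>e\<in>UNIV. ?\<Gamma> e i p * ?M e q r a) + (\<Sum>e\<in>UNIV. ?\<Gamma> e i r * ?M p q e a)" for q a
  have step1: "pd i (\<lambda>z. W2 z p r) x = (\<Sum>q\<in>UNIV. \<Sum>a\<in>UNIV. ?G q a * KX q a) + (\<Sum>q\<in>UNIV. \<Sum>a\<in>UNIV. ?G q a * PX q a)"
    unfolding W2_def
  proof (rule gcontract[OF x])
    fix q a
    show "(\<lambda>z. MM z p q r a) differentiable (at x)" by (rule da[OF MM_smooth x])
    show "pd i (\<lambda>z. MM z p q r a) x = KX q a + (\<Sum>e\<in>UNIV. ?\<Gamma> e i q * ?M p e r a)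
       + (\<Sum>e\<in>UNIV. ?\<Gamma> e i a * ?M p q r e) + PX q a"
      unfolding pd_MM[OF x] KX_def PX_def by (simp add: algebra_simps)
  qed
  have step2: "(\<Sum>q\<in>UNIV. \<Sum>a\<in>UNIV. ?G q a * PX q a) =
     (\<Sum>e\<in>UNIV. ?\<Gamma> e i p * W2 x e r) + (\<Sum>e\<in>UNIV. ?\<Gamma> e i r * W2 x p e)"
    unfolding PX_def distrib_left sum.distrib gtrans W2_def ..
  have z1: "(\<Sum>q\<in>UNIV. \<Sum>a\<in>UNIV. ?G q a * (A x q * ?M p i r a)) = 0"
    unfolding gA1[OF gs] Aup_def[symmetric] using MM_z4[OF x] by (simp add: mult.commute)
  have z2: "(\<Sum>q\<in>UNIV. \<Sum>a\<in>UNIV. ?G q a * (A x a * ?M p q r i)) = 0"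
    unfolding gA2 Aup_def[symmetric] using MM_z2[OF x] by (simp add: mult.commute)
  have step3: "(\<Sum>q\<in>UNIV. \<Sum>a\<in>UNIV. ?G q a * KX q a) =
   4 * A x i * W2 x p r + A x p * W2 x i r + A x r * W2 x p i"
    unfolding KX_def distrib_left sum.distrib gconst z1 z2 W2_def mult.assoc by simp
  show ?thesis unfolding step1 step2 step3 by simp
qed

lemma trace_W2: "weyl_sq_trace g z = (\<Sum>p\<in>UNIV. \<Sum>q\<in>UNIV. ginv g z p q * W2 z p q)"
  unfolding weyl_sq_trace_def weyl_sq_W2 ..

lemma pd_trace: assumes x: "x \<in> U" shows "pd i (\<lambda>z. weyl_sq_trace g z) x = 4 * A x i * weyl_sq_trace g x"
proof -
  let ?\<Gamma> = "christoffel g x" and ?G = "ginv g x" and ?W = "W2 x"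
  have gs: "\<forall>u v. ?G u v = ?G v u" using ginv_sym[OF x] by blast
  define KX where "KX p q = 4 * A x i * ?W p q + A x p * ?W i q + A x q * ?W p i" for p q
  have step1: "pd i (\<lambda>z. weyl_sq_trace g z) x = (\<Sum>p\<in>UNIV. \<Sum>q\<in>UNIV. ?G p q * KX p q) + (\<Sum>p\<in>UNIV. \<Sum>q\<in>UNIV. ?G p q * 0)"
    unfolding trace_W2
  proof (rule gcontract[OF x])
    fix p q
    show "(\<lambda>z. W2 z p q) differentiable (at x)" by (rule da[OF W2_smooth x])
    show "pd i (\<lambda>z. W2 z p q) x = KX p q + (\<Sum>e\<in>UNIV. ?\<Gamma> e i p * ?W e q)
       + (\<Sum>e\<in>UNIV. ?\<Gamma> e i q * ?W p e) + 0"
      unfolding pd_W2[OF x] KX_def by (simp add: algebra_simps)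
  qed
  have z1: "(\<Sum>p\<in>UNIV. \<Sum>q\<in>UNIV. ?G p q * (A x p * ?W i q)) = 0"
    unfolding gA1[OF gs] Aup_def[symmetric] using W2_z2[OF x] by (simp add: mult.commute)
  have z2: "(\<Sum>p\<in>UNIV. \<Sum>q\<in>UNIV. ?G p q * (A x q * ?W p i)) = 0"
    unfolding gA2 Aup_def[symmetric] using W2_z1[OF x] by (simp add: mult.commute)
  have s3: "(\<Sum>p\<in>UNIV. \<Sum>q\<in>UNIV. ?G p q * KX p q) = 4 * A x i * weyl_sq_trace g x"
    unfolding KX_def distrib_left sum.distrib gconst z1 z2 mult.assoc trace_W2 by simp
  show ?thesis using step1 s3 by simp
qed

end

lemma pd_mult_line:
  assumes "((\<lambda>t. f (x + t *\<^sub>R axis i 1)) has_real_derivative Df) (at 0)" "h differentiable (at x)"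
  shows "pd i (\<lambda>y. f y * h y) x = Df * h x + f x * pd i h x"
  using DERIV_mult[OF assms(1) pd_line[OF assms(2)]]
  by (intro pd_eq) (simp add: algebra_simps)

lemma abs_powr_sq: "\<bar>y::real\<bar> powr (-3/4) = (y^2) powr (-3/8)"
proof (cases "y = 0")
  case True thus ?thesis by simp
next
  case False
  hence "y^2 = \<bar>y\<bar> powr 2" by (simp add: powr_realpow[symmetric])
  hence "(y^2) powr (-3/8) = (\<bar>y\<bar> powr 2) powr (-3/8)" by simp
  also have "\<dots> = \<bar>y\<bar> powr (2 * (-3/8))" by (rule powr_powr)
  also have "2 * (-3/8::real) = -3/4" by simp
  finally show ?thesis by simp
qed

context cqr begin

lemma line_deriv_f:
  assumes x: "x \<in> U" and nz: "weyl_sq_trace g x \<noteq> 0"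
  shows "((\<lambda>t. \<bar>weyl_sq_trace g (x + t *\<^sub>R axis i 1)\<bar> powr (-3/4)) has_real_derivative
           (-3) * A x i * \<bar>weyl_sq_trace g x\<bar> powr (-3/4)) (at 0)"
proof -
  define w where "w t = weyl_sq_trace g (x + t *\<^sub>R axis i 1)" for t
  have dw: "(w has_real_derivative pd i (\<lambda>z. weyl_sq_trace g z) x) (at 0)"
    unfolding w_def by (rule pd_line[OF da[OF weyl_sq_trace_smooth x]])
  have w0: "w 0 = weyl_sq_trace g x" by (simp add: w_def)
  have d2: "((\<lambda>t. (w t)^2) has_real_derivative (of_nat 2 * (w 0)^(2-1) * pd i (\<lambda>z. weyl_sq_trace g z) x)) (at 0)"
    using DERIV_mult[OF dw dw] by (simp add: power2_eq_square algebra_simps)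
  have pos: "(w 0)^2 > 0" using nz w0 by simp
  have "((\<lambda>t. ((w t)^2) powr (\<lambda>t. -3/8) t) has_real_derivative
     (((w 0)^2) powr (-3/8)) * (0 * ln ((w 0)^2) + (of_nat 2 * (w 0)^(2-1) * pd i (\<lambda>z. weyl_sq_trace g z) x) * (-3/8) / (w 0)^2)) (at 0)"
    using DERIV_powr[OF d2 pos DERIV_const[of "-3/8::real"]] by simp
  moreover have "(\<lambda>t. ((w t)^2) powr (\<lambda>t. -3/8) t) = (\<lambda>t. \<bar>weyl_sq_trace g (x + t *\<^sub>R axis i 1)\<bar> powr (-3/4))"
    by (rule ext) (simp only: w_def abs_powr_sq)
  moreover have "(((w 0)^2) powr (-3/8)) * (0 * ln ((w 0)^2) + (of_nat 2 * (w 0)^(2-1) * pd i (\<lambda>z. weyl_sq_trace g z) x) * (-3/8) / (w 0)^2)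
     = (-3) * A x i * \<bar>weyl_sq_trace g x\<bar> powr (-3/4)"
    unfolding pd_trace[OF x] w0 abs_powr_sq[symmetric] using nz by (simp add: power2_eq_square field_simps)
  ultimately show ?thesis by simp
qed

lemma cov2_T:
  assumes x: "x \<in> U" and nz: "weyl_sq_trace g x \<noteq> 0"
  shows "cov2 g (\<lambda>y p r. \<bar>weyl_sq_trace g y\<bar> powr (-3/4) * weyl_sq g y p r) x i j q =
    \<bar>weyl_sq_trace g x\<bar> powr (-3/4) * (A x i * W2 x j q + A x j * W2 x i q + A x q * W2 x j i)"
proof -
  let ?f = "\<bar>weyl_sq_trace g x\<bar> powr (-3/4)" and ?\<Gamma> = "christoffel g x"
  have ws: "weyl_sq g = W2" by (rule ext)+ (rule weyl_sq_W2)
  have "pd i (\<lambda>y. \<bar>weyl_sq_trace g y\<bar> powr (-3/4) * W2 y j q) x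
      = (-3) * A x i * ?f * W2 x j q + ?f * pd i (\<lambda>y. W2 y j q) x"
    by (rule pd_mult_line[OF line_deriv_f[OF x nz] da[OF W2_smooth x]])
  thus ?thesis unfolding cov2_def ws pd_W2[OF x]
    by (simp add: algebra_simps sum.distrib sum_distrib_left)
qed

lemma codazzi:
  assumes x: "x \<in> U" and nz: "weyl_sq_trace g x \<noteq> 0"
  shows "cov2 g (\<lambda>y p r. \<bar>weyl_sq_trace g y\<bar> powr (-3/4) * weyl_sq g y p r) x i j q =
         cov2 g (\<lambda>y p r. \<bar>weyl_sq_trace g y\<bar> powr (-3/4) * weyl_sq g y p r) x j i q"
  unfolding cov2_T[OF x nz] using W2_sym[OF x, of j i] by (simp add: algebra_simps)

end

theorem mainTheorem4:
  fixes U :: "(real^'n::finite) set"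
    and g :: "real^'n \<Rightarrow> 'n \<Rightarrow> 'n \<Rightarrow> real"
    and A :: "real^'n \<Rightarrow> 'n \<Rightarrow> real"
  assumes "CARD('n) \<ge> 3"
    and "pseudo_riemannian_chart U g"
    and "CQR U g A"
    and "\<forall>x\<in>U. weyl_sq_trace g x \<noteq> 0"
  shows "\<forall>x\<in>U. \<forall>i j q.
           cov2 g (\<lambda>y p r. \<bar>weyl_sq_trace g y\<bar> powr (-3/4) * weyl_sq g y p r) x i j q =
           cov2 g (\<lambda>y p r. \<bar>weyl_sq_trace g y\<bar> powr (-3/4) * weyl_sq g y p r) x j i q"
proof -
  interpret cqr U g A
  proof (unfold_locales)
    show "pseudo_riemannian_chart U g" by (rule assms(2))
    show "3 \<le> CARD('n)" by (rule assms(1))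
    fix x i j k l m assume "x \<in> U"
    thus "cov4 g (weyl g) x i j k l m =
        2 * A x i * weyl g x j k l m + A x j * weyl g x i k l m + A x k * weyl g x j i l m
        + A x l * weyl g x j k i m + A x m * weyl g x j k l i"
      using assms(3) unfolding CQR_def by blast
  qed
  show ?thesis using codazzi assms(4) by blast
qed

end
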